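(* Let $(\mathcal K,[\cdot,\cdot])$ be a Krein space and let $T$ be a closed, densely defined linear operator in $\mathcal K$ such that $\rho(T^{[*]}T)\neq\emptyset$ and $\rho(TT^{[*]})\neq\emptyset$. If $0\in\rho(T^{[*]}T)\cap\sigma(TT^{[*]})$, then $0$ is a pole of order one of the resolvent $\lambda\mapsto(TT^{[*]}-\lambda)^{-1}$.
   Context: $T^{[*]}$ is the Krein space adjoint of $T$; products have natural domains. $\rho(S)$ is the set of $\lambda\in\mathbb C$ with $S-\lambda$ bijective from $\operatorname{dom}S$ onto $\mathcal K$ with bounded inverse, $\sigma(S)=\mathbb C\setminus\rho(S)$. *)

theory Defs
  imports Complex_Main
begin

text \<open>
  A Krein space is modelled abstractly: a type 'a with addition (ab_group_add),
  a complex scalar multiplication sc, a Hermitian sesquilinear form kf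
  (linear in the first, antilinear in the second argument), and a fundamental
  decomposition K = Kp [+] Km, with Kp, Km mutually kf-orthogonal and
  (Kp, kf), (Km, -kf) Hilbert spaces.  The topology is the one of the
  associated Hilbert norm (independent of the fundamental decomposition).
\<close>

definition cvs :: "(complex \<Rightarrow> 'a::ab_group_add \<Rightarrow> 'a) \<Rightarrow> bool" where
  "cvs sc \<longleftrightarrow>
     (\<forall>a x y. sc a (x + y) = sc a x + sc a y) \<and>
     (\<forall>a b x. sc (a + b) x = sc a x + sc b x) \<and>
     (\<forall>a b x. sc a (sc b x) = sc (a * b) x) \<and>
     (\<forall>x. sc 1 x = x)"

definition csubspace :: "(complex \<Rightarrow> 'a::ab_group_add \<Rightarrow> 'a) \<Rightarrow> 'a set \<Rightarrow> bool" where
  "csubspace sc S \<longleftrightarrow> 0 \<in> S \<and> (\<forall>x\<in>S. \<forall>y\<in>S. x + y \<in> S) \<and> (\<forall>a. \<forall>x\<in>S. sc a x \<in> S)"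

definition hermitian_form :: "(complex \<Rightarrow> 'a::ab_group_add \<Rightarrow> 'a) \<Rightarrow> ('a \<Rightarrow> 'a \<Rightarrow> complex) \<Rightarrow> bool" where
  "hermitian_form sc kf \<longleftrightarrow>
     (\<forall>x y z. kf (x + y) z = kf x z + kf y z) \<and>
     (\<forall>a x z. kf (sc a x) z = a * kf x z) \<and>
     (\<forall>x y. kf y x = cnj (kf x y))"

definition pcomp :: "'a::ab_group_add set \<Rightarrow> 'a set \<Rightarrow> 'a \<Rightarrow> 'a" where
  "pcomp Kp Km x = (THE p. p \<in> Kp \<and> x - p \<in> Km)"

definition mcomp :: "'a::ab_group_add set \<Rightarrow> 'a set \<Rightarrow> 'a \<Rightarrow> 'a" where
  "mcomp Kp Km x = x - pcomp Kp Km x"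

definition knorm :: "('a::ab_group_add \<Rightarrow> 'a \<Rightarrow> complex) \<Rightarrow> 'a set \<Rightarrow> 'a set \<Rightarrow> 'a \<Rightarrow> real" where
  "knorm kf Kp Km x =
     sqrt (Re (kf (pcomp Kp Km x) (pcomp Kp Km x)) - Re (kf (mcomp Kp Km x) (mcomp Kp Km x)))"

definition kconv :: "('a::ab_group_add \<Rightarrow> 'a \<Rightarrow> complex) \<Rightarrow> 'a set \<Rightarrow> 'a set \<Rightarrow> (nat \<Rightarrow> 'a) \<Rightarrow> 'a \<Rightarrow> bool" where
  "kconv kf Kp Km X l \<longleftrightarrow> (\<lambda>n. knorm kf Kp Km (X n - l)) \<longlonglongrightarrow> 0"

definition kcauchy :: "('a::ab_group_add \<Rightarrow> 'a \<Rightarrow> complex) \<Rightarrow> 'a set \<Rightarrow> 'a set \<Rightarrow> (nat \<Rightarrow> 'a) \<Rightarrow> bool" where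
  "kcauchy kf Kp Km X \<longleftrightarrow>
     (\<forall>e>0. \<exists>N. \<forall>m\<ge>N. \<forall>n\<ge>N. knorm kf Kp Km (X m - X n) < e)"

definition krein_space ::
  "(complex \<Rightarrow> 'a::ab_group_add \<Rightarrow> 'a) \<Rightarrow> ('a \<Rightarrow> 'a \<Rightarrow> complex) \<Rightarrow> 'a set \<Rightarrow> 'a set \<Rightarrow> bool" where
  "krein_space sc kf Kp Km \<longleftrightarrow>
     cvs sc \<and> hermitian_form sc kf \<and>
     csubspace sc Kp \<and> csubspace sc Km \<and>
     Kp \<inter> Km = {0} \<and> (\<forall>x. \<exists>p\<in>Kp. \<exists>m\<in>Km. x = p + m) \<and>
     (\<forall>x\<in>Kp. \<forall>y\<in>Km. kf x y = 0) \<and>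
     (\<forall>x\<in>Kp. x \<noteq> 0 \<longrightarrow> Re (kf x x) > 0) \<and>
     (\<forall>x\<in>Km. x \<noteq> 0 \<longrightarrow> Re (kf x x) < 0) \<and>
     (\<forall>X. (\<forall>n. X n \<in> Kp) \<and> kcauchy kf Kp Km X \<longrightarrow> (\<exists>l\<in>Kp. kconv kf Kp Km X l)) \<and>
     (\<forall>X. (\<forall>n. X n \<in> Km) \<and> kcauchy kf Kp Km X \<longrightarrow> (\<exists>l\<in>Km. kconv kf Kp Km X l))"

text \<open>Operators in K: a domain together with an action (only relevant on the domain).\<close>
type_synonym 'a lop = "'a set \<times> ('a \<Rightarrow> 'a)"

definition linear_op :: "(complex \<Rightarrow> 'a::ab_group_add \<Rightarrow> 'a) \<Rightarrow> 'a lop \<Rightarrow> bool" where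
  "linear_op sc T \<longleftrightarrow> csubspace sc (fst T) \<and>
     (\<forall>x\<in>fst T. \<forall>y\<in>fst T. snd T (x + y) = snd T x + snd T y) \<and>
     (\<forall>a. \<forall>x\<in>fst T. snd T (sc a x) = sc a (snd T x))"

definition kdense :: "('a::ab_group_add \<Rightarrow> 'a \<Rightarrow> complex) \<Rightarrow> 'a set \<Rightarrow> 'a set \<Rightarrow> 'a set \<Rightarrow> bool" where
  "kdense kf Kp Km D \<longleftrightarrow> (\<forall>x. \<exists>X. (\<forall>n. X n \<in> D) \<and> kconv kf Kp Km X x)"

definition closed_op :: "('a::ab_group_add \<Rightarrow> 'a \<Rightarrow> complex) \<Rightarrow> 'a set \<Rightarrow> 'a set \<Rightarrow> 'a lop \<Rightarrow> bool" where
  "closed_op kf Kp Km T \<longleftrightarrow>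
     (\<forall>X x y. (\<forall>n. X n \<in> fst T) \<and> kconv kf Kp Km X x \<and> kconv kf Kp Km (\<lambda>n. snd T (X n)) y
        \<longrightarrow> x \<in> fst T \<and> snd T x = y)"

definition kadj :: "('a \<Rightarrow> 'a \<Rightarrow> complex) \<Rightarrow> 'a lop \<Rightarrow> 'a lop" where
  "kadj kf T =
     ({y. \<exists>z. \<forall>x\<in>fst T. kf (snd T x) y = kf x z},
      (\<lambda>y. THE z. \<forall>x\<in>fst T. kf (snd T x) y = kf x z))"

definition lop_comp :: "'a lop \<Rightarrow> 'a lop \<Rightarrow> 'a lop" where
  "lop_comp S T = ({x \<in> fst T. snd T x \<in> fst S}, (\<lambda>x. snd S (snd T x)))"

definition shift_op :: "(complex \<Rightarrow> 'a::ab_group_add \<Rightarrow> 'a) \<Rightarrow> 'a lop \<Rightarrow> complex \<Rightarrow> 'a \<Rightarrow> 'a" where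
  "shift_op sc S l = (\<lambda>x. snd S x - sc l x)"

definition resolvent :: "(complex \<Rightarrow> 'a::ab_group_add \<Rightarrow> 'a) \<Rightarrow> 'a lop \<Rightarrow> complex \<Rightarrow> 'a \<Rightarrow> 'a" where
  "resolvent sc S l = inv_into (fst S) (shift_op sc S l)"

definition rho :: "(complex \<Rightarrow> 'a::ab_group_add \<Rightarrow> 'a) \<Rightarrow> ('a \<Rightarrow> 'a \<Rightarrow> complex) \<Rightarrow> 'a set \<Rightarrow> 'a set
                    \<Rightarrow> 'a lop \<Rightarrow> complex set" where
  "rho sc kf Kp Km S =
     {l. bij_betw (shift_op sc S l) (fst S) UNIV \<and>
         (\<exists>C. \<forall>y. knorm kf Kp Km (resolvent sc S l y) \<le> C * knorm kf Kp Km y)}"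

definition spec :: "(complex \<Rightarrow> 'a::ab_group_add \<Rightarrow> 'a) \<Rightarrow> ('a \<Rightarrow> 'a \<Rightarrow> complex) \<Rightarrow> 'a set \<Rightarrow> 'a set
                    \<Rightarrow> 'a lop \<Rightarrow> complex set" where
  "spec sc kf Kp Km S = - rho sc kf Kp Km S"

definition bounded_op :: "(complex \<Rightarrow> 'a::ab_group_add \<Rightarrow> 'a) \<Rightarrow> ('a \<Rightarrow> 'a \<Rightarrow> complex) \<Rightarrow> 'a set \<Rightarrow> 'a set
                    \<Rightarrow> ('a \<Rightarrow> 'a) \<Rightarrow> bool" where
  "bounded_op sc kf Kp Km A \<longleftrightarrow>
     (\<forall>x y. A (x + y) = A x + A y) \<and> (\<forall>a x. A (sc a x) = sc a (A x)) \<and>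
     (\<exists>C. \<forall>x. knorm kf Kp Km (A x) \<le> C * knorm kf Kp Km x)"

definition opnorm :: "('a::ab_group_add \<Rightarrow> 'a \<Rightarrow> complex) \<Rightarrow> 'a set \<Rightarrow> 'a set \<Rightarrow> ('a \<Rightarrow> 'a) \<Rightarrow> real" where
  "opnorm kf Kp Km A = Sup {knorm kf Kp Km (A x) | x. knorm kf Kp Km x \<le> 1}"

text \<open>
  mu is a pole of order one of the resolvent l \<mapsto> (S - l)^{-1}: on a punctured
  disc around mu all points are in rho(S) and the resolvent has a Laurent expansion
  (convergent in operator norm) with bounded coefficients A n, whose principal part
  consists of the single term (l - mu)^{-1} A(-1) with A(-1) \<noteq> 0.
\<close>
definition pole_order_one :: "(complex \<Rightarrow> 'a::ab_group_add \<Rightarrow> 'a) \<Rightarrow> ('a \<Rightarrow> 'a \<Rightarrow> complex) \<Rightarrow> 'a set \<Rightarrow> 'a set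
                    \<Rightarrow> 'a lop \<Rightarrow> complex \<Rightarrow> bool" where
  "pole_order_one sc kf Kp Km S mu \<longleftrightarrow>
     (\<exists>r>0. \<exists>A :: int \<Rightarrow> 'a \<Rightarrow> 'a.
        (\<forall>n. bounded_op sc kf Kp Km (A n)) \<and> A (-1) \<noteq> (\<lambda>_. 0) \<and>
        (\<forall>l. 0 < cmod (l - mu) \<and> cmod (l - mu) < r \<longrightarrow>
           l \<in> rho sc kf Kp Km S \<and>
           (\<lambda>N. opnorm kf Kp Km
               (\<lambda>y. resolvent sc S l y - (sc (inverse (l - mu)) (A (-1) y)
                     + (\<Sum>k<N. sc ((l - mu) ^ k) (A (int k) y))))) \<longlonglongrightarrow> 0))"

end

theory Submission
  imports Defs
begin

locale kr =
  fixes sc :: "complex \<Rightarrow> 'a::ab_group_add \<Rightarrow> 'a"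
    and kf :: "'a \<Rightarrow> 'a \<Rightarrow> complex"
    and Kp Km :: "'a set"
  assumes K: "krein_space sc kf Kp Km"
begin

lemma cvs: "cvs sc" using K unfolding krein_space_def by blast
lemma herm: "hermitian_form sc kf" using K unfolding krein_space_def by blast
lemma subp: "csubspace sc Kp" using K unfolding krein_space_def by blast
lemma subm: "csubspace sc Km" using K unfolding krein_space_def by blast
lemma pm_inter: "Kp \<inter> Km = {0}" using K unfolding krein_space_def by blast
lemma pm_decomp: "\<exists>p\<in>Kp. \<exists>m\<in>Km. x = p + m" using K unfolding krein_space_def by blast
lemma pm_orth: "x \<in> Kp \<Longrightarrow> y \<in> Km \<Longrightarrow> kf x y = 0" using K unfolding krein_space_def by blast
lemma p_pos: "x \<in> Kp \<Longrightarrow> x \<noteq> 0 \<Longrightarrow> Re (kf x x) > 0" using K unfolding krein_space_def by blast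
lemma m_neg: "x \<in> Km \<Longrightarrow> x \<noteq> 0 \<Longrightarrow> Re (kf x x) < 0" using K unfolding krein_space_def by blast
lemma p_compl: "(\<forall>n. X n \<in> Kp) \<Longrightarrow> kcauchy kf Kp Km X \<Longrightarrow> \<exists>l\<in>Kp. kconv kf Kp Km X l"
  using K unfolding krein_space_def by blast
lemma m_compl: "(\<forall>n. X n \<in> Km) \<Longrightarrow> kcauchy kf Kp Km X \<Longrightarrow> \<exists>l\<in>Km. kconv kf Kp Km X l"
  using K unfolding krein_space_def by blast

lemma sc_add_r[simp]: "sc a (x + y) = sc a x + sc a y" using cvs unfolding cvs_def by blast
lemma sc_add_l: "sc (a + b) x = sc a x + sc b x" using cvs unfolding cvs_def by blast
lemma sc_assoc[simp]: "sc a (sc b x) = sc (a * b) x" using cvs unfolding cvs_def by blast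
lemma sc_one[simp]: "sc 1 x = x" using cvs unfolding cvs_def by blast
lemma sc_zero_l[simp]: "sc 0 x = 0"
  using sc_add_l[of 0 0 x] by simp
lemma sc_zero_r[simp]: "sc a 0 = 0"
  using sc_add_r[of a 0 0] by simp
lemma sc_neg_r: "sc a (- x) = - sc a x"
proof -
  have "sc a x + sc a (- x) = 0" using sc_add_r[of a x "-x"] by simp
  then show ?thesis by (metis add.commute eq_neg_iff_add_eq_0)
qed
lemma sc_diff_r: "sc a (x - y) = sc a x - sc a y"
  using sc_add_r[of a x "-y"] sc_neg_r by simp
lemma sc_neg_l: "sc (- a) x = - sc a x"
proof -
  have "sc a x + sc (-a) x = 0" using sc_add_l[of a "-a" x] by simp
  then show ?thesis by (simp add: add_eq_0_iff)
qed
lemma sc_diff_l: "sc (a - b) x = sc a x - sc b x"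
  using sc_add_l[of a "-b" x] sc_neg_l by simp
lemma sc_m1: "sc (-1) x = - x" using sc_neg_l[of 1 x] by simp
lemma sc_sum: "sc a (sum f A) = (\<Sum>i\<in>A. sc a (f i))"
  by (induction A rule: infinite_finite_induct) auto
lemma sc_inv_cancel: "c \<noteq> 0 \<Longrightarrow> sc (inverse c) (sc c x) = x"
  by simp
lemma sc_cancel_inv: "c \<noteq> 0 \<Longrightarrow> sc c (sc (inverse c) x) = x"
  by simp
lemma sc_eq0: "c \<noteq> 0 \<Longrightarrow> sc c x = 0 \<Longrightarrow> x = 0"
  by (metis sc_inv_cancel sc_zero_r)

lemma csub_0: "csubspace sc S \<Longrightarrow> 0 \<in> S" unfolding csubspace_def by blast
lemma csub_add: "csubspace sc S \<Longrightarrow> x \<in> S \<Longrightarrow> y \<in> S \<Longrightarrow> x + y \<in> S" unfolding csubspace_def by blast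
lemma csub_sc: "csubspace sc S \<Longrightarrow> x \<in> S \<Longrightarrow> sc a x \<in> S" unfolding csubspace_def by blast
lemma csub_neg: "csubspace sc S \<Longrightarrow> x \<in> S \<Longrightarrow> - x \<in> S"
  using csub_sc[of S x "-1"] sc_m1 by simp
lemma csub_diff: "csubspace sc S \<Longrightarrow> x \<in> S \<Longrightarrow> y \<in> S \<Longrightarrow> x - y \<in> S"
  using csub_add[of S x "-y"] csub_neg by simp

lemma kf_add_l: "kf (x + y) z = kf x z + kf y z" using herm unfolding hermitian_form_def by blast
lemma kf_sc_l: "kf (sc a x) z = a * kf x z" using herm unfolding hermitian_form_def by blast
lemma kf_cnj: "kf y x = cnj (kf x y)" using herm unfolding hermitian_form_def by blast
lemma kf_add_r: "kf z (x + y) = kf z x + kf z y"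
  by (metis kf_cnj kf_add_l complex_cnj_add)
lemma kf_sc_r: "kf z (sc a x) = cnj a * kf z x"
  by (metis kf_cnj kf_sc_l complex_cnj_mult)
lemma kf_0_l[simp]: "kf 0 z = 0" using kf_sc_l[of 0 0 z] by simp
lemma kf_0_r[simp]: "kf z 0 = 0" using kf_sc_r[of z 0 0] by simp
lemma kf_neg_l: "kf (- x) z = - kf x z" using kf_sc_l[of "-1" x z] sc_m1 by simp
lemma kf_neg_r: "kf z (- x) = - kf z x" using kf_sc_r[of z "-1" x] sc_m1 by simp
lemma kf_diff_l: "kf (x - y) z = kf x z - kf y z" using kf_add_l[of x "-y" z] kf_neg_l by simp
lemma kf_diff_r: "kf z (x - y) = kf z x - kf z y" using kf_add_r[of z x "-y"] kf_neg_r by simp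

end

lemma cs_real_aux:
  fixes a b s :: real
  assumes a: "a \<ge> 0" and b: "b \<ge> 0" and H: "\<And>r. 0 \<le> a + 2*r*s + r^2*b"
  shows "s \<le> sqrt a * sqrt b"
proof (cases "s \<le> 0")
  case True then show ?thesis using a b by (meson mult_nonneg_nonneg real_sqrt_ge_zero order_trans)
next
  case False
  then have s: "s > 0" by simp
  show ?thesis
  proof (cases "b = 0")
    case True
    have "0 \<le> a + 2*(-(a+1)/(2*s))*s + (-(a+1)/(2*s))^2*b" by (rule H)
    then have False using True s by (simp add: field_simps)
    then show ?thesis ..
  next
    case False
    then have bp: "b > 0" using b by simp
    have "0 \<le> a + 2*(-s/b)*s + (-s/b)^2*b" by (rule H)
    then have "0 \<le> a - s^2/b" using bp by (simp add: field_simps power2_eq_square)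
    then have "s^2 \<le> a*b" using bp by (simp add: field_simps)
    then have "sqrt (s^2) \<le> sqrt (a*b)" by (rule real_sqrt_le_mono)
    then show ?thesis using s by (simp add: real_sqrt_mult)
  qed
qed

context kr begin

abbreviation "pc \<equiv> pcomp Kp Km"
abbreviation "mc \<equiv> mcomp Kp Km"
abbreviation "nm \<equiv> knorm kf Kp Km"

lemma decomp_unique:
  assumes "p \<in> Kp" "q \<in> Km" "p' \<in> Kp" "q' \<in> Km" "p + q = p' + q'"
  shows "p = p' \<and> q = q'"
proof -
  have "p - p' = q' - q" using assms(5) by (simp add: algebra_simps)
  moreover have "p - p' \<in> Kp" using assms csub_diff subp by blast
  moreover have "q' - q \<in> Km" using assms csub_diff subm by blast
  ultimately have "q' - q \<in> Kp \<inter> Km" by simp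
  then have "q' - q = 0" using pm_inter by blast
  then show ?thesis using assms(5) \<open>p - p' = q' - q\<close> by simp
qed

lemma pcomp_char: assumes "p \<in> Kp" "q \<in> Km" shows "pc (p + q) = p"
  unfolding pcomp_def
proof (rule the_equality)
  show "p \<in> Kp \<and> p + q - p \<in> Km" using assms by simp
next
  fix p' assume "p' \<in> Kp \<and> p + q - p' \<in> Km"
  then have "p' \<in> Kp" "p + q - p' \<in> Km" by auto
  moreover have "p + q = p' + (p + q - p')" by simp
  ultimately show "p' = p" using decomp_unique[of p q p' "p + q - p'"] assms by metis
qed

lemma mcomp_char: assumes "p \<in> Kp" "q \<in> Km" shows "mc (p + q) = q"
  using pcomp_char[OF assms] unfolding mcomp_def by simp

lemma pc_mc: "pc x \<in> Kp \<and> mc x \<in> Km \<and> x = pc x + mc x"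
proof -
  obtain p q where pq: "p \<in> Kp" "q \<in> Km" "x = p + q" using pm_decomp by blast
  then show ?thesis using pcomp_char[OF pq(1,2)] mcomp_char[OF pq(1,2)] by simp
qed

lemma pc_in: "pc x \<in> Kp" using pc_mc by blast
lemma mc_in: "mc x \<in> Km" using pc_mc by blast
lemma pc_mc_sum: "pc x + mc x = x" using pc_mc by metis

lemma pc_add: "pc (x + y) = pc x + pc y"
proof -
  have "x + y = (pc x + pc y) + (mc x + mc y)" using pc_mc_sum[of x] pc_mc_sum[of y] by (simp add: algebra_simps)
  then show ?thesis using pcomp_char[of "pc x + pc y" "mc x + mc y"] pc_in mc_in csub_add subp subm by metis
qed
lemma mc_add: "mc (x + y) = mc x + mc y"
  unfolding mcomp_def using pc_add by (simp add: algebra_simps)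
lemma pc_sc: "pc (sc a x) = sc a (pc x)"
proof -
  have "sc a x = sc a (pc x) + sc a (mc x)" using pc_mc_sum[of x] by (metis sc_add_r)
  then show ?thesis using pcomp_char[of "sc a (pc x)" "sc a (mc x)"] pc_in mc_in csub_sc subp subm by metis
qed
lemma mc_sc: "mc (sc a x) = sc a (mc x)"
  unfolding mcomp_def using pc_sc by (simp add: sc_diff_r)
lemma pc_0[simp]: "pc 0 = 0" using pc_sc[of 0 0] by simp
lemma mc_0[simp]: "mc 0 = 0" using mc_sc[of 0 0] by simp
lemma pc_neg: "pc (- x) = - pc x" using pc_sc[of "-1" x] sc_m1 by simp
lemma mc_neg: "mc (- x) = - mc x" using mc_sc[of "-1" x] sc_m1 by simp
lemma pc_diff: "pc (x - y) = pc x - pc y" using pc_add[of x "-y"] pc_neg by simp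
lemma mc_diff: "mc (x - y) = mc x - mc y" using mc_add[of x "-y"] mc_neg by simp
lemma pc_pc: "pc (pc x) = pc x" using pcomp_char[of "pc x" 0] pc_in csub_0 subm by simp
lemma mc_pc: "mc (pc x) = 0" using mcomp_char[of "pc x" 0] pc_in csub_0 subm by simp
lemma pc_mc': "pc (mc x) = 0" using pcomp_char[of 0 "mc x"] mc_in csub_0 subp by simp
lemma mc_mc: "mc (mc x) = mc x" using mcomp_char[of 0 "mc x"] mc_in csub_0 subp by simp

definition "ip x y = kf (pc x) (pc y) - kf (mc x) (mc y)"
definition "jj x = pc x - mc x"

lemma pc_jj: "pc (jj x) = pc x" unfolding jj_def by (simp add: pc_diff pc_pc pc_mc')
lemma mc_jj: "mc (jj x) = - mc x" unfolding jj_def by (simp add: mc_diff mc_pc mc_mc)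

lemma ip_add_l: "ip (x + y) z = ip x z + ip y z"
  unfolding ip_def by (simp add: pc_add mc_add kf_add_l)
lemma ip_sc_l: "ip (sc a x) z = a * ip x z"
  unfolding ip_def by (simp add: pc_sc mc_sc kf_sc_l right_diff_distrib)
lemma ip_cnj: "ip y x = cnj (ip x y)"
  unfolding ip_def by (metis kf_cnj complex_cnj_diff)
lemma ip_add_r: "ip z (x + y) = ip z x + ip z y"
  by (metis ip_cnj ip_add_l complex_cnj_add)
lemma ip_sc_r: "ip z (sc a x) = cnj a * ip z x"
  by (metis ip_cnj ip_sc_l complex_cnj_mult)

lemma kf_orth1: "kf (pc x) (mc y) = 0" using pm_orth pc_in mc_in by blast
lemma kf_orth2: "kf (mc x) (pc y) = 0" using kf_cnj kf_orth1 by (metis complex_cnj_zero)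

lemma kf_decomp: "kf x y = kf (pc x) (pc y) + kf (mc x) (mc y)"
proof -
  have "kf x y = kf (pc x + mc x) (pc y + mc y)" using pc_mc_sum by metis
  also have "\<dots> = kf (pc x) (pc y) + kf (mc x) (mc y)"
    by (simp add: kf_add_l kf_add_r kf_orth1 kf_orth2)
  finally show ?thesis .
qed

lemma kf_eq_ip: "kf x y = ip x (jj y)"
  unfolding ip_def by (simp add: pc_jj mc_jj kf_neg_r kf_decomp[of x y])

lemma kf_jj: "kf (jj x) x = ip x x"
  unfolding ip_def by (simp add: pc_jj mc_jj kf_neg_l kf_decomp[of "jj x" x])

definition "Qf x = Re (ip x x)"

lemma nm_def': "nm x = sqrt (Qf x)"
  unfolding knorm_def Qf_def ip_def mcomp_def by simp

lemma Rekf_p: "Re (kf (pc x) (pc x)) \<ge> 0"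
  using p_pos[of "pc x"] pc_in by (cases "pc x = 0") force+
lemma Rekf_m: "Re (kf (mc x) (mc x)) \<le> 0"
  using m_neg[of "mc x"] mc_in by (cases "mc x = 0") force+

lemma Qf_ge0: "Qf x \<ge> 0"
proof -
  have "Qf x = Re (kf (pc x) (pc x)) - Re (kf (mc x) (mc x))" unfolding Qf_def ip_def by simp
  then show ?thesis using Rekf_p[of x] Rekf_m[of x] by linarith
qed
lemma nm_ge0[simp]: "nm x \<ge> 0" unfolding nm_def' using Qf_ge0[of x] by simp
lemma nm_sq: "(nm x)^2 = Qf x" unfolding nm_def' using Qf_ge0[of x] by simp

lemma nm_eq0: assumes "nm x = 0" shows "x = 0"
proof -
  have "Qf x = 0" using nm_sq[of x] assms by simp
  then have "Re (kf (pc x) (pc x)) = 0" "Re (kf (mc x) (mc x)) = 0"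
    unfolding Qf_def ip_def using Rekf_p[of x] Rekf_m[of x] by auto
  then have "pc x = 0" "mc x = 0" using p_pos[of "pc x"] m_neg[of "mc x"] pc_in mc_in by force+
  then show ?thesis using pc_mc_sum[of x] by simp
qed

lemma nm_0[simp]: "nm 0 = 0" unfolding nm_def' Qf_def ip_def by simp

lemma Qf_sc: "Qf (sc a x) = (cmod a)^2 * Qf x"
proof -
  have "ip (sc a x) (sc a x) = (a * cnj a) * ip x x" by (simp add: ip_sc_l ip_sc_r)
  also have "a * cnj a = complex_of_real ((cmod a)^2)" using complex_norm_square[of a] by simp
  finally show ?thesis unfolding Qf_def by simp
qed

lemma nm_sc: "nm (sc a x) = cmod a * nm x"
  unfolding nm_def' Qf_sc by (simp add: real_sqrt_mult)

lemma nm_neg: "nm (- x) = nm x" using nm_sc[of "-1" x] sc_m1 by simp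
lemma nm_diff_sym: "nm (x - y) = nm (y - x)" using nm_neg[of "x - y"] by simp

lemma Qf_expand: "Qf (x + sc (complex_of_real r) y) = Qf x + 2*r*Re (ip x y) + r^2 * Qf y"
proof -
  have "ip (x + sc (complex_of_real r) y) (x + sc (complex_of_real r) y)
      = ip x x + of_real r * ip x y + of_real r * ip y x + of_real (r^2) * ip y y"
    by (simp add: ip_add_l ip_add_r ip_sc_l ip_sc_r power2_eq_square algebra_simps)
  moreover have "Re (ip y x) = Re (ip x y)" using ip_cnj[of y x] by simp
  ultimately show ?thesis unfolding Qf_def by (simp add: algebra_simps)
qed

lemma cs_re: "Re (ip x y) \<le> nm x * nm y"
  unfolding nm_def'
  by (rule cs_real_aux[OF Qf_ge0 Qf_ge0]) (metis Qf_expand Qf_ge0)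

lemma cs: "cmod (ip x y) \<le> nm x * nm y"
proof (cases "ip x y = 0")
  case True then show ?thesis by simp
next
  case False
  define a where "a = cnj (ip x y) / complex_of_real (cmod (ip x y))"
  have ca: "cmod a = 1" unfolding a_def using False by (simp add: norm_divide)
  have "ip (sc a x) y = a * ip x y" by (simp add: ip_sc_l)
  also have "\<dots> = complex_of_real (cmod (ip x y))"
    unfolding a_def using False
    using complex_norm_square[of "ip x y"] by (simp add: power2_eq_square field_simps mult.commute)
  finally have "cmod (ip x y) = Re (ip (sc a x) y)" by simp
  also have "\<dots> \<le> nm (sc a x) * nm y" by (rule cs_re)
  also have "\<dots> = nm x * nm y" using ca nm_sc by simp
  finally show ?thesis .
qed

lemma Qf_jj: "Qf (jj x) = Qf x"
  unfolding Qf_def ip_def by (simp add: pc_jj mc_jj kf_neg_l kf_neg_r)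
lemma nm_jj: "nm (jj x) = nm x" unfolding nm_def' Qf_jj ..

lemma kf_bound: "cmod (kf x y) \<le> nm x * nm y"
  using cs[of x "jj y"] kf_eq_ip nm_jj by simp

lemma Re_kf_jj: "Re (kf (jj x) x) = (nm x)^2"
  using kf_jj nm_sq Qf_def by simp

lemma nm_triangle: "nm (x + y) \<le> nm x + nm y"
proof -
  have "Qf (x + y) = Qf x + 2 * Re (ip x y) + Qf y" using Qf_expand[of x 1 y] by simp
  also have "\<dots> \<le> (nm x)^2 + 2 * (nm x * nm y) + (nm y)^2" using cs_re[of x y] nm_sq by simp
  also have "\<dots> = (nm x + nm y)^2" by (simp add: power2_eq_square algebra_simps)
  finally have "sqrt (Qf (x+y)) \<le> sqrt ((nm x + nm y)^2)" by (rule real_sqrt_le_mono)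
  then show ?thesis unfolding nm_def'[of "x+y"] by simp
qed

lemma nm_diff_tri: "nm (x - z) \<le> nm (x - y) + nm (y - z)"
  using nm_triangle[of "x - y" "y - z"] by simp

lemma nm_diff_le: "nm (x - y) \<le> nm x + nm y"
  using nm_triangle[of x "-y"] nm_neg by simp

lemma nm_rev_tri: "\<bar>nm x - nm y\<bar> \<le> nm (x - y)"
  using nm_triangle[of "x - y" y] nm_triangle[of "y - x" x] nm_diff_sym[of x y] by auto

lemma nm_sum: "nm (sum f A) \<le> (\<Sum>i\<in>A. nm (f i))"
proof (induction A rule: infinite_finite_induct)
  case (insert a A)
  then show ?case using nm_triangle[of "f a" "sum f A"] by simp
qed auto

lemma nm_pc: "nm (pc x) \<le> nm x"
proof -
  have "Qf (pc x) \<le> Qf x" unfolding Qf_def ip_def using Rekf_m[of x] by (simp add: pc_pc mc_pc)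
  then show ?thesis unfolding nm_def' by simp
qed
lemma nm_mc: "nm (mc x) \<le> nm x"
proof -
  have "Qf (mc x) \<le> Qf x" unfolding Qf_def ip_def using Rekf_p[of x] by (simp add: pc_mc' mc_mc)
  then show ?thesis unfolding nm_def' by simp
qed

end

lemma real_squeeze:
  fixes f g :: "nat \<Rightarrow> real"
  assumes "\<And>n. 0 \<le> g n" "\<And>n. g n \<le> f n" "f \<longlonglongrightarrow> 0"
  shows "g \<longlonglongrightarrow> 0"
proof (rule tendsto_0_le[OF assms(3), where K=1])
  show "\<forall>\<^sub>F x in sequentially. norm (g x) \<le> norm (f x) * 1"
    using assms(1,2) by (auto intro!: always_eventually) (smt (verit))
qed

context kr begin

abbreviation "kc \<equiv> kconv kf Kp Km"

lemma kc_bound: assumes "\<And>n. nm (Y n - b) \<le> f n" "f \<longlonglongrightarrow> 0" shows "kc Y b"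
  unfolding kconv_def using real_squeeze[of "\<lambda>n. nm (Y n - b)" f] assms by simp

lemma kc_D: "kc X a \<Longrightarrow> (\<lambda>n. nm (X n - a)) \<longlonglongrightarrow> 0" unfolding kconv_def .

lemma kc_const: "kc (\<lambda>n. x) x" by (rule kc_bound[where f="\<lambda>n. 0"]) auto

lemma kc_add: assumes "kc X a" "kc Y b" shows "kc (\<lambda>n. X n + Y n) (a + b)"
proof (rule kc_bound[where f="\<lambda>n. nm (X n - a) + nm (Y n - b)"])
  fix n show "nm (X n + Y n - (a + b)) \<le> nm (X n - a) + nm (Y n - b)"
    using nm_triangle[of "X n - a" "Y n - b"] by (simp add: algebra_simps)
  show "(\<lambda>n. nm (X n - a) + nm (Y n - b)) \<longlonglongrightarrow> 0"
    using tendsto_add[OF kc_D[OF assms(1)] kc_D[OF assms(2)]] by simp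
qed

lemma kc_sc: assumes "kc X a" shows "kc (\<lambda>n. sc c (X n)) (sc c a)"
proof (rule kc_bound[where f="\<lambda>n. cmod c * nm (X n - a)"])
  fix n show "nm (sc c (X n) - sc c a) \<le> cmod c * nm (X n - a)"
    by (simp add: sc_diff_r[symmetric] nm_sc)
  show "(\<lambda>n. cmod c * nm (X n - a)) \<longlonglongrightarrow> 0"
    using tendsto_mult[OF tendsto_const kc_D[OF assms]] by simp
qed

lemma kc_neg: assumes "kc X a" shows "kc (\<lambda>n. - X n) (- a)"
  using kc_sc[OF assms, of "-1"] by (simp add: sc_m1)

lemma kc_diff: assumes "kc X a" "kc Y b" shows "kc (\<lambda>n. X n - Y n) (a - b)"
  using kc_add[OF assms(1) kc_neg[OF assms(2)]] by simp

lemma kc_unique: assumes "kc X a" "kc X b" shows "a = b"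
proof -
  have "(\<lambda>n. nm (X n - a) + nm (X n - b)) \<longlonglongrightarrow> 0"
    using tendsto_add[OF kc_D[OF assms(1)] kc_D[OF assms(2)]] by simp
  moreover have "\<And>n. nm (a - b) \<le> nm (X n - a) + nm (X n - b)"
    using nm_diff_tri nm_diff_sym by metis
  ultimately have "(\<lambda>n. nm (a - b)) \<longlonglongrightarrow> 0"
    using real_squeeze[of "\<lambda>n. nm (a - b)" "\<lambda>n. nm (X n - a) + nm (X n - b)"] by simp
  then have "nm (a - b) = 0" using LIMSEQ_const_iff by blast
  then show ?thesis using nm_eq0[of "a - b"] by simp
qed

lemma kc_Suc: assumes "kc X a" shows "kc (\<lambda>n. X (Suc n)) a"
  using assms unfolding kconv_def using LIMSEQ_Suc by fastforce

lemma kc_nm: assumes "kc X a" shows "(\<lambda>n. nm (X n)) \<longlonglongrightarrow> nm a"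
proof -
  have "(\<lambda>n. nm (X n) - nm a) \<longlonglongrightarrow> 0"
  proof (rule tendsto_0_le[OF kc_D[OF assms], where K=1])
    show "\<forall>\<^sub>F x in sequentially. norm (nm (X x) - nm a) \<le> norm (nm (X x - a)) * 1"
      using nm_rev_tri by (auto intro!: always_eventually)
  qed
  then show ?thesis using LIM_zero_iff by blast
qed

lemma kc_nm_le: assumes "kc X a" "\<And>n. nm (X n) \<le> c" shows "nm a \<le> c"
  using LIMSEQ_le_const2[OF kc_nm[OF assms(1)]] assms(2) by blast

lemma kc_kf_l: assumes "kc X a" shows "(\<lambda>n. kf (X n) y) \<longlonglongrightarrow> kf a y"
proof -
  have "(\<lambda>n. kf (X n) y - kf a y) \<longlonglongrightarrow> 0"
  proof (rule tendsto_0_le[OF kc_D[OF assms], where K="nm y"])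
    show "\<forall>\<^sub>F x in sequentially. norm (kf (X x) y - kf a y) \<le> norm (nm (X x - a)) * nm y"
      using kf_bound by (auto intro!: always_eventually simp: kf_diff_l[symmetric])
  qed
  then show ?thesis using LIM_zero_iff by blast
qed

lemma kc_kf_r: assumes "kc X a" shows "(\<lambda>n. kf y (X n)) \<longlonglongrightarrow> kf y a"
proof -
  have "(\<lambda>n. kf y (X n) - kf y a) \<longlonglongrightarrow> 0"
  proof (rule tendsto_0_le[OF kc_D[OF assms], where K="nm y"])
    show "\<forall>\<^sub>F x in sequentially. norm (kf y (X x) - kf y a) \<le> norm (nm (X x - a)) * nm y"
      using kf_bound by (auto intro!: always_eventually simp: kf_diff_r[symmetric] mult.commute)
  qed
  then show ?thesis using LIM_zero_iff by blast
qed

lemma kc_complete: assumes "kcauchy kf Kp Km X" shows "\<exists>l. kc X l"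
proof -
  have cp: "kcauchy kf Kp Km (\<lambda>n. pc (X n))"
    unfolding kcauchy_def
  proof (intro allI impI)
    fix e :: real assume "e > 0"
    then obtain N where "\<forall>m\<ge>N. \<forall>n\<ge>N. nm (X m - X n) < e" using assms unfolding kcauchy_def by blast
    then show "\<exists>N. \<forall>m\<ge>N. \<forall>n\<ge>N. nm (pc (X m) - pc (X n)) < e"
      using nm_pc by (metis pc_diff order.strict_trans1)
  qed
  have cm: "kcauchy kf Kp Km (\<lambda>n. mc (X n))"
    unfolding kcauchy_def
  proof (intro allI impI)
    fix e :: real assume "e > 0"
    then obtain N where "\<forall>m\<ge>N. \<forall>n\<ge>N. nm (X m - X n) < e" using assms unfolding kcauchy_def by blast
    then show "\<exists>N. \<forall>m\<ge>N. \<forall>n\<ge>N. nm (mc (X m) - mc (X n)) < e"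
      using nm_mc by (metis mc_diff order.strict_trans1)
  qed
  obtain lp where lp: "kc (\<lambda>n. pc (X n)) lp" using p_compl[OF _ cp] pc_in by blast
  obtain lm where lm: "kc (\<lambda>n. mc (X n)) lm" using m_compl[OF _ cm] mc_in by blast
  have "kc (\<lambda>n. pc (X n) + mc (X n)) (lp + lm)" by (rule kc_add[OF lp lm])
  then show ?thesis using pc_mc_sum by auto
qed

lemma kc_series:
  assumes b: "\<And>k. nm (a k) \<le> b k" and sb: "summable b"
  shows "\<exists>l. kc (\<lambda>n. \<Sum>k<n. a k) l \<and> nm l \<le> suminf b"
proof -
  have b0: "\<And>k. 0 \<le> b k" using b nm_ge0 order_trans by blast
  have key: "nm ((\<Sum>k<m. a k) - (\<Sum>k<n. a k)) \<le> sum b {n..<m}" if "n \<le> m" for m n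
  proof -
    have "(\<Sum>k<m. a k) = (\<Sum>k<n. a k) + sum a {n..<m}"
      using sum.atLeastLessThan_concat[of 0 n m a] that by (simp add: atLeast0LessThan)
    then have "nm ((\<Sum>k<m. a k) - (\<Sum>k<n. a k)) = nm (sum a {n..<m})" by simp
    also have "\<dots> \<le> (\<Sum>k\<in>{n..<m}. nm (a k))" by (rule nm_sum)
    also have "\<dots> \<le> sum b {n..<m}" by (rule sum_mono) (rule b)
    finally show ?thesis .
  qed
  have "kcauchy kf Kp Km (\<lambda>n. \<Sum>k<n. a k)"
    unfolding kcauchy_def
  proof (intro allI impI)
    fix e :: real assume e: "e > 0"
    then obtain N where N: "\<forall>m\<ge>N. \<forall>n. norm (sum b {m..<n}) < e" using sb summable_Cauchy by blast
    have "nm ((\<Sum>k<m. a k) - (\<Sum>k<n. a k)) < e" if "m \<ge> N" "n \<ge> N" for m n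
    proof (cases "n \<le> m")
      case True
      have "norm (sum b {n..<m}) < e" using N that(2) by blast
      moreover have "0 \<le> sum b {n..<m}" using b0 by (simp add: sum_nonneg)
      ultimately have "sum b {n..<m} < e" by simp
      then show ?thesis using key[OF True] by simp
    next
      case False
      have "norm (sum b {m..<n}) < e" using N that(1) by blast
      moreover have "0 \<le> sum b {m..<n}" using b0 by (simp add: sum_nonneg)
      ultimately have "sum b {m..<n} < e" by simp
      then show ?thesis using key[of m n] False nm_diff_sym by simp
    qed
    then show "\<exists>N. \<forall>m\<ge>N. \<forall>n\<ge>N. nm ((\<Sum>k<m. a k) - (\<Sum>k<n. a k)) < e" by blast
  qed
  then obtain l where l: "kc (\<lambda>n. \<Sum>k<n. a k) l" using kc_complete by blast
  have "nm (\<Sum>k<n. a k) \<le> suminf b" for n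
  proof -
    have "nm (\<Sum>k<n. a k) \<le> (\<Sum>k<n. nm (a k))" by (rule nm_sum)
    also have "\<dots> \<le> (\<Sum>k<n. b k)" by (rule sum_mono) (rule b)
    also have "\<dots> \<le> suminf b" using sum_le_suminf[OF sb, of "{..<n}"] b0 by simp
    finally show ?thesis .
  qed
  then show ?thesis using l kc_nm_le by blast
qed

definition "lin A \<longleftrightarrow> (\<forall>x y. A (x + y) = A x + A y) \<and> (\<forall>a x. A (sc a x) = sc a (A x))"
definition "bnd A c \<longleftrightarrow> (\<forall>x. nm (A x) \<le> c * nm x)"

lemma bounded_op_iff: "bounded_op sc kf Kp Km A \<longleftrightarrow> lin A \<and> (\<exists>c. bnd A c)"
  unfolding bounded_op_def lin_def bnd_def by blast

lemma lin_add: "lin A \<Longrightarrow> A (x + y) = A x + A y" unfolding lin_def by blast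
lemma lin_sc: "lin A \<Longrightarrow> A (sc a x) = sc a (A x)" unfolding lin_def by blast
lemma lin_0: "lin A \<Longrightarrow> A 0 = 0" using lin_sc[of A 0 0] by simp
lemma lin_neg: "lin A \<Longrightarrow> A (- x) = - A x" using lin_sc[of A "-1" x] by (simp add: sc_m1)
lemma lin_diff: "lin A \<Longrightarrow> A (x - y) = A x - A y" using lin_add[of A x "-y"] lin_neg by simp
lemma lin_sum: "lin A \<Longrightarrow> A (sum f S) = (\<Sum>i\<in>S. A (f i))"
  by (induction S rule: infinite_finite_induct) (auto simp: lin_0 lin_add)
lemma lin_comp: "lin A \<Longrightarrow> lin B \<Longrightarrow> lin (\<lambda>x. A (B x))" unfolding lin_def by simp
lemma lin_id: "lin (\<lambda>x. x)" unfolding lin_def by simp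
lemma lin_pow: "lin A \<Longrightarrow> lin (A ^^ k)"
  by (induction k) (auto simp: lin_id lin_comp[of A] comp_def id_def)

lemma bnd_D: "bnd A c \<Longrightarrow> nm (A x) \<le> c * nm x" unfolding bnd_def by blast
lemma bnd_nonneg: "bnd A c \<Longrightarrow> bnd A (max c 0)"
  unfolding bnd_def by (meson max.cobounded1 mult_right_mono nm_ge0 order_trans)
lemma bnd_comp: "bnd A c \<Longrightarrow> bnd B d \<Longrightarrow> c \<ge> 0 \<Longrightarrow> bnd (\<lambda>x. A (B x)) (c * d)"
  unfolding bnd_def by (metis (no_types, opaque_lifting) mult.assoc mult_left_mono order_trans)
lemma bnd_id: "bnd (\<lambda>x. x) 1" unfolding bnd_def by simp
lemma bnd_pow: "bnd A c \<Longrightarrow> c \<ge> 0 \<Longrightarrow> bnd (A ^^ k) (c ^ k)"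
proof (induction k)
  case 0 then show ?case using bnd_id by (simp add: id_def)
next
  case (Suc k)
  then have "bnd (\<lambda>x. A ((A ^^ k) x)) (c * c^k)" using bnd_comp by blast
  then show ?case by simp
qed

lemma kc_lin: assumes "lin A" "bnd A c" "kc X a" shows "kc (\<lambda>n. A (X n)) (A a)"
proof (rule kc_bound[where f="\<lambda>n. max c 0 * nm (X n - a)"])
  fix n show "nm (A (X n) - A a) \<le> max c 0 * nm (X n - a)"
    using bnd_D[OF bnd_nonneg[OF assms(2)]] lin_diff[OF assms(1)] by metis
  show "(\<lambda>n. max c 0 * nm (X n - a)) \<longlonglongrightarrow> 0"
    using tendsto_mult[OF tendsto_const kc_D[OF assms(3)]] by simp
qed

end

context kr begin

lemma kc_offset: "kc X a \<Longrightarrow> kc (\<lambda>n. X (n + k)) a"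
  unfolding kconv_def using LIMSEQ_ignore_initial_segment by fastforce

lemma baire:
  fixes P :: "nat \<Rightarrow> 'a \<Rightarrow> bool"
  assumes H: "\<And>n x r. 0 < r \<Longrightarrow> \<exists>x' r'. 0 < r' \<and> r' \<le> r/2 \<and>
                 (\<forall>z. nm (z - x') \<le> r' \<longrightarrow> nm (z - x) < r \<and> \<not> P n z)"
  shows "\<exists>z. \<forall>n. \<not> P n z"
proof -
  define Q where "Q n xr xr' \<longleftrightarrow> 0 < snd xr' \<and> snd xr' \<le> snd xr/2 \<and>
                 (\<forall>z. nm (z - fst xr') \<le> snd xr' \<longrightarrow> nm (z - fst xr) < snd xr \<and> \<not> P n z)" for n xr xr'
  define f where "f n xr = (SOME xr'. Q n xr xr')" for n xr
  define s where "s = rec_nat (0, 1) f"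
  have s0: "s 0 = (0, 1)" and sS: "s (Suc n) = f n (s n)" for n unfolding s_def by simp_all
  have step: "Q n xr (f n xr)" if h: "0 < snd xr" for n xr
  proof -
    obtain x' r' where "Q n xr (x', r')" using H[OF h, of "fst xr" n] unfolding Q_def by auto
    then show ?thesis unfolding f_def by (rule someI)
  qed
  have pos: "0 < snd (s n)" for n
  proof (induction n)
    case 0 then show ?case using s0 by simp
  next
    case (Suc n) then show ?case using step[OF Suc] sS unfolding Q_def by simp
  qed
  have stp: "Q n (s n) (s (Suc n))" for n using step[OF pos] sS by simp
  define x where "x n = fst (s n)" for n
  define r where "r n = snd (s n)" for n
  have rpos: "0 < r n" for n using pos r_def by simp
  have rle: "r n \<le> (1/2)^n" for n
  proof (induction n)
    case 0 then show ?case using s0 r_def by simp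
  next
    case (Suc n) then show ?case using stp[of n] unfolding Q_def r_def by simp
  qed
  have nest: "nm (z - x (n + k)) \<le> r (n + k) \<Longrightarrow> nm (z - x n) \<le> r n" for z n k
  proof (induction k)
    case 0 then show ?case by simp
  next
    case (Suc k)
    then have "nm (z - x (n + k)) < r (n + k)" using stp[of "n+k"] unfolding Q_def x_def r_def by simp
    then show ?case using Suc.IH by simp
  qed
  have xin: "nm (x m - x n) \<le> r n" if "n \<le> m" for m n
    using nest[of "x m" n "m - n"] that rpos[of m] by simp
  have "kcauchy kf Kp Km x"
    unfolding kcauchy_def
  proof (intro allI impI)
    fix e :: real assume e: "e > 0"
    obtain N where N: "(1/2::real)^N < e/2" using real_arch_pow_inv[of "e/2" "1/2"] e by auto
    have "nm (x m - x n) < e" if "m \<ge> N" "n \<ge> N" for m n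
    proof -
      have "nm (x m - x n) \<le> nm (x m - x N) + nm (x N - x n)" by (rule nm_diff_tri)
      also have "\<dots> \<le> r N + r N" using xin[OF that(1)] xin[OF that(2)] nm_diff_sym[of "x N" "x n"] by simp
      also have "\<dots> < e" using rle[of N] N by simp
      finally show ?thesis .
    qed
    then show "\<exists>N. \<forall>m\<ge>N. \<forall>n\<ge>N. nm (x m - x n) < e" by blast
  qed
  then obtain z where z: "kc x z" using kc_complete by blast
  have "\<not> P n z" for n
  proof -
    have "kc (\<lambda>m. x (m + Suc n) - x (Suc n)) (z - x (Suc n))"
      using kc_diff[OF kc_offset[OF z] kc_const] .
    moreover have "nm (x (m + Suc n) - x (Suc n)) \<le> r (Suc n)" for m using xin by simp
    ultimately have "nm (z - x (Suc n)) \<le> r (Suc n)" by (rule kc_nm_le)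
    then show ?thesis using stp[of n] unfolding Q_def x_def r_def by simp
  qed
  then show ?thesis by blast
qed

lemma closed_graph:
  assumes lA: "lin A" and clA: "\<And>X x y. kc X x \<Longrightarrow> kc (\<lambda>n. A (X n)) y \<Longrightarrow> A x = y"
  shows "\<exists>c. bnd A c"
proof -
  have "\<not> (\<forall>n x r. 0 < r \<longrightarrow> (\<exists>x' r'. 0 < r' \<and> r' \<le> r/2 \<and>
                 (\<forall>z. nm (z - x') \<le> r' \<longrightarrow> nm (z - x) < r \<and> \<not> nm (A z) \<le> real n)))"
  proof
    assume "\<forall>n x r. 0 < r \<longrightarrow> (\<exists>x' r'. 0 < r' \<and> r' \<le> r/2 \<and>
                 (\<forall>z. nm (z - x') \<le> r' \<longrightarrow> nm (z - x) < r \<and> \<not> nm (A z) \<le> real n))"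
    then obtain z where "\<forall>n. \<not> nm (A z) \<le> real n" using baire[of "\<lambda>n z. nm (A z) \<le> real n"] by blast
    then show False using real_nat_ceiling_ge by blast
  qed
  then obtain n x0 r where r: "0 < r" and H0: "\<And>x' r'. 0 < r' \<Longrightarrow> r' \<le> r/2 \<Longrightarrow>
      \<exists>z. nm (z - x') \<le> r' \<and> \<not> (nm (z - x0) < r \<and> \<not> nm (A z) \<le> real n)"
    by blast
  have ap1: "\<exists>z. nm (A z) \<le> real n \<and> nm (z - y') < e" if h: "nm (y' - x0) < r/2" "e > 0" for y' e
  proof -
    have m1: "0 < min (e/2) (r/2)" using r h(2) by simp
    have m2: "min (e/2) (r/2) \<le> r/2" by simp
    obtain z where z: "nm (z - y') \<le> min (e/2) (r/2)" "\<not> (nm (z - x0) < r \<and> \<not> nm (A z) \<le> real n)"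
      using H0[OF m1 m2, of y'] by blast
    have "nm (z - x0) \<le> nm (z - y') + nm (y' - x0)" by (rule nm_diff_tri)
    also have "\<dots> < r" using z(1) h(1) by linarith
    finally show ?thesis using z h(2) by auto
  qed
  define \<rho> where "\<rho> = r/2"
  define M where "M = 2 * real n"
  have rho: "\<rho> > 0" and M0: "M \<ge> 0" using r by (auto simp: \<rho>_def M_def)
  have ap0: "\<exists>z. nm (A z) \<le> M \<and> nm (z - y) < e" if h: "nm y < \<rho>" "e > 0" for y e
  proof -
    obtain z1 where z1: "nm (A z1) \<le> real n" "nm (z1 - (x0 + y)) < e/2"
      using ap1[of "x0 + y" "e/2"] h by (auto simp: \<rho>_def)
    obtain z2 where z2: "nm (A z2) \<le> real n" "nm (z2 - x0) < e/2"
      using ap1[of "x0" "e/2"] h r by auto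
    have "nm (A (z1 - z2)) \<le> M"
      using lin_diff[OF lA, of z1 z2] nm_diff_le[of "A z1" "A z2"] z1(1) z2(1) by (simp add: M_def)
    moreover have "nm ((z1 - z2) - y) < e"
    proof -
      have "(z1 - z2) - y = (z1 - (x0 + y)) - (z2 - x0)" by (simp add: algebra_simps)
      then have "nm ((z1 - z2) - y) \<le> nm (z1 - (x0 + y)) + nm (z2 - x0)" using nm_diff_le by metis
      then show ?thesis using z1(2) z2(2) by simp
    qed
    ultimately show ?thesis by blast
  qed
  have ap: "\<exists>z. nm (A z) \<le> s * M \<and> nm (z - y) < e" if s: "s > 0" and h: "nm y < s * \<rho>" "e > 0" for s y e
  proof -
    define y' where "y' = sc (complex_of_real (1/s)) y"
    have "nm y' = nm y / s" unfolding y'_def nm_sc using s by (simp add: norm_divide)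
    moreover have "nm y / s < \<rho>" using h(1) s by (simp add: divide_less_eq mult.commute)
    ultimately have "nm y' < \<rho>" by simp
    then obtain z' where z': "nm (A z') \<le> M" "nm (z' - y') < e / s" using ap0[of y' "e/s"] h s by auto
    define z where "z = sc (complex_of_real s) z'"
    have "nm (A z) = s * nm (A z')" unfolding z_def lin_sc[OF lA] nm_sc using s by simp
    then have "nm (A z) \<le> s * M" using z'(1) s by simp
    moreover have "z - y = sc (complex_of_real s) (z' - y')"
      unfolding z_def y'_def sc_diff_r using s by simp
    then have "nm (z - y) = s * nm (z' - y')" using s by (simp add: nm_sc)
    then have "nm (z - y) < e" using z'(2) s by (simp add: field_simps)
    ultimately show ?thesis by blast
  qed
  have main: "nm (A y) \<le> 2 * M" if y: "nm y < \<rho>" for y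
  proof -
    define g where "g k v = (SOME z. nm (A z) \<le> (1/2)^k * M \<and> nm (z - v) < (1/2)^(Suc k) * \<rho>)" for k v
    define Y where "Y = rec_nat y (\<lambda>k v. v - g k v)"
    have Y0: "Y 0 = y" and YS: "Y (Suc k) = Y k - g k (Y k)" for k unfolding Y_def by simp_all
    have gp: "nm (A (g k v)) \<le> (1/2)^k * M \<and> nm (g k v - v) < (1/2)^(Suc k) * \<rho>"
      if "nm v < (1/2)^k * \<rho>" for k v
    proof -
      have "\<exists>z. nm (A z) \<le> (1/2)^k * M \<and> nm (z - v) < (1/2)^(Suc k) * \<rho>"
        using ap[of "(1/2)^k" v "(1/2)^(Suc k) * \<rho>"] that rho by simp
      then show ?thesis unfolding g_def by (rule someI_ex)
    qed
    have Yb: "nm (Y k) < (1/2)^k * \<rho>" for k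
    proof (induction k)
      case 0 then show ?case using Y0 y by simp
    next
      case (Suc k)
      then show ?case using gp[OF Suc] YS[of k] nm_diff_sym by simp
    qed
    define Z where "Z k = g k (Y k)" for k
    have ZA: "nm (A (Z k)) \<le> M * (1/2)^k" for k using gp[OF Yb[of k]] unfolding Z_def by (simp add: mult.commute)
    have psum: "(\<Sum>i<k. Z i) = y - Y k" for k
      by (induction k) (auto simp: Y0 YS Z_def)
    have c1: "kc (\<lambda>k. \<Sum>i<k. Z i) y"
    proof (rule kc_bound[where f="\<lambda>k. (1/2)^k * \<rho>"])
      fix k show "nm ((\<Sum>i<k. Z i) - y) \<le> (1/2)^k * \<rho>" using psum Yb[of k] nm_neg[of "Y k"] by simp
      show "(\<lambda>k. (1/2::real)^k * \<rho>) \<longlonglongrightarrow> 0"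
        by (rule tendsto_mult_left_zero) (rule LIMSEQ_realpow_zero; simp)
    qed
    have sb: "summable (\<lambda>k. M * (1/2::real)^k)" by (rule summable_mult) (simp add: summable_geometric)
    have sv: "suminf (\<lambda>k. M * (1/2::real)^k) = 2 * M"
      using suminf_mult[of "\<lambda>k. (1/2::real)^k" M] suminf_geometric[of "1/2::real"] by simp
    obtain w where w: "kc (\<lambda>n. \<Sum>k<n. A (Z k)) w" "nm w \<le> 2 * M"
      using kc_series[OF ZA sb] sv by auto
    have "kc (\<lambda>n. A (\<Sum>k<n. Z k)) w" using w(1) by (simp only: lin_sum[OF lA])
    then have "A y = w" using clA[OF c1] by blast
    then show ?thesis using w(2) by simp
  qed
  have "bnd A (4 * M / \<rho>)"
    unfolding bnd_def
  proof
    fix x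
    show "nm (A x) \<le> 4 * M / \<rho> * nm x"
    proof (cases "nm x = 0")
      case True
      then have "x = 0" by (rule nm_eq0)
      then show ?thesis using lin_0[OF lA] by simp
    next
      case False
      then have nx: "nm x > 0" using nm_ge0[of x] by linarith
      define t where "t = \<rho> / (2 * nm x)"
      have t: "t > 0" using nx rho by (simp add: t_def)
      have "nm (sc (complex_of_real t) x) = t * nm x" unfolding nm_sc using t by simp
      also have "\<dots> = \<rho> / 2" unfolding t_def using nx by simp
      finally have "nm (sc (complex_of_real t) x) = \<rho> / 2" .
      then have "nm (A (sc (complex_of_real t) x)) \<le> 2 * M" using main rho by simp
      then have "t * nm (A x) \<le> 2 * M" unfolding lin_sc[OF lA] nm_sc using t by simp
      then have "nm (A x) \<le> 2 * M / t" using t by (simp add: field_simps)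
      also have "2 * M / t = 4 * M / \<rho> * nm x" unfolding t_def using nx rho by (simp add: field_simps)
      finally show ?thesis .
    qed
  qed
  then show ?thesis by blast
qed

end

context kr begin

lemma inv_lin:
  assumes sub: "csubspace sc Dm" and fa: "\<And>x y. x \<in> Dm \<Longrightarrow> y \<in> Dm \<Longrightarrow> f (x + y) = f x + f y"
    and fs: "\<And>a x. x \<in> Dm \<Longrightarrow> f (sc a x) = sc a (f x)" and bij: "bij_betw f Dm UNIV"
  shows "lin (inv_into Dm f)"
proof -
  have inj: "inj_on f Dm" and sur: "f ` Dm = UNIV" using bij unfolding bij_betw_def by auto
  have gi: "inv_into Dm f y \<in> Dm" and fg: "f (inv_into Dm f y) = y" for y
     by (rule inv_into_into, simp add: sur) (rule f_inv_into_f, simp add: sur)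
  show ?thesis unfolding lin_def
  proof (intro conjI allI)
    fix x y
    have h: "f (inv_into Dm f x + inv_into Dm f y) = x + y" using fa[OF gi gi] fg by simp
    show "inv_into Dm f (x + y) = inv_into Dm f x + inv_into Dm f y"
      using inv_into_f_eq[OF inj csub_add[OF sub gi gi] h] .
  next
    fix a x
    have h: "f (sc a (inv_into Dm f x)) = sc a x" using fs[OF gi] fg by simp
    show "inv_into Dm f (sc a x) = sc a (inv_into Dm f x)"
      using inv_into_f_eq[OF inj csub_sc[OF sub gi] h] .
  qed
qed

lemma rho_props:
  assumes "l \<in> rho sc kf Kp Km S"
  shows "resolvent sc S l y \<in> fst S" "shift_op sc S l (resolvent sc S l y) = y"
    "\<exists>c\<ge>0. bnd (resolvent sc S l) c"
    "x \<in> fst S \<Longrightarrow> resolvent sc S l (shift_op sc S l x) = x"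
proof -
  have bij: "bij_betw (shift_op sc S l) (fst S) UNIV" using assms unfolding rho_def by blast
  then show "resolvent sc S l y \<in> fst S" "shift_op sc S l (resolvent sc S l y) = y"
    unfolding resolvent_def bij_betw_def using inv_into_into[of y "shift_op sc S l" "fst S"] f_inv_into_f[of y "shift_op sc S l" "fst S"] by auto
  show "x \<in> fst S \<Longrightarrow> resolvent sc S l (shift_op sc S l x) = x"
    using bij unfolding resolvent_def bij_betw_def by simp
  obtain C where "\<forall>y. nm (resolvent sc S l y) \<le> C * nm y" using assms unfolding rho_def by blast
  then have "bnd (resolvent sc S l) C" unfolding bnd_def by blast
  then have "bnd (resolvent sc S l) (max C 0)" by (rule bnd_nonneg)
  then show "\<exists>c\<ge>0. bnd (resolvent sc S l) c" by (intro exI[of _ "max C 0"]) simp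
qed

lemma rho_lin:
  assumes "l \<in> rho sc kf Kp Km S" "linear_op sc S"
  shows "lin (resolvent sc S l)"
  unfolding resolvent_def
proof (rule inv_lin)
  show "csubspace sc (fst S)" using assms(2) unfolding linear_op_def by blast
  show "bij_betw (shift_op sc S l) (fst S) UNIV" using assms(1) unfolding rho_def by blast
  fix x y assume "x \<in> fst S" "y \<in> fst S"
  then show "shift_op sc S l (x + y) = shift_op sc S l x + shift_op sc S l y"
  proof -
    have "snd S (x + y) = snd S x + snd S y" using assms(2) \<open>x \<in> fst S\<close> \<open>y \<in> fst S\<close> unfolding linear_op_def by blast
    then show ?thesis unfolding shift_op_def by (simp add: add_diff_add)
  qed
next
  fix a x assume "x \<in> fst S"
  then show "shift_op sc S l (sc a x) = sc a (shift_op sc S l x)"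
  proof -
    have "snd S (sc a x) = sc a (snd S x)" using assms(2) \<open>x \<in> fst S\<close> unfolding linear_op_def by blast
    then show ?thesis unfolding shift_op_def by (simp add: sc_diff_r mult.commute)
  qed
qed

end

locale kop = kr sc kf Kp Km
  for sc :: "complex \<Rightarrow> 'a::ab_group_add \<Rightarrow> 'a" and kf Kp Km +
  fixes T :: "'a lop"
  assumes linT: "linear_op sc T" and cloT: "closed_op kf Kp Km T" and denT: "kdense kf Kp Km (fst T)"
begin

abbreviation "D0 \<equiv> fst T"
abbreviation "t \<equiv> snd T"
abbreviation "Ds \<equiv> fst (kadj kf T)"
abbreviation "ts \<equiv> snd (kadj kf T)"

lemma subD0: "csubspace sc D0" using linT unfolding linear_op_def by blast
lemma t_add: "x \<in> D0 \<Longrightarrow> y \<in> D0 \<Longrightarrow> t (x + y) = t x + t y" using linT unfolding linear_op_def by blast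
lemma t_sc: "x \<in> D0 \<Longrightarrow> t (sc a x) = sc a (t x)" using linT unfolding linear_op_def by blast
lemma t_0: "t 0 = 0" using t_sc[of 0 0] csub_0[OF subD0] by simp
lemma t_diff: "x \<in> D0 \<Longrightarrow> y \<in> D0 \<Longrightarrow> t (x - y) = t x - t y"
  using t_add[of x "-y"] t_sc[of y "-1"] csub_neg[OF subD0] by (simp add: sc_m1)

lemma dense_zero: assumes "\<And>x. x \<in> D0 \<Longrightarrow> kf x u = 0" shows "u = 0"
proof -
  obtain X where X: "\<forall>n. X n \<in> D0" "kc X (jj u)" using denT unfolding kdense_def by blast
  have "(\<lambda>n. kf (X n) u) \<longlonglongrightarrow> kf (jj u) u" by (rule kc_kf_l[OF X(2)])
  moreover have "(\<lambda>n. kf (X n) u) = (\<lambda>n. 0)" using X(1) assms by auto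
  ultimately have "kf (jj u) u = 0" using LIMSEQ_const_iff by metis
  then have "(nm u)^2 = 0" using Re_kf_jj[of u] by simp
  then show ?thesis using nm_eq0 by simp
qed

lemma dense_eq: assumes "\<And>x. x \<in> D0 \<Longrightarrow> kf x u = kf x v" shows "u = v"
  using dense_zero[of "u - v"] assms by (simp add: kf_diff_r)

lemma adj_eq:
  assumes "\<And>x. x \<in> D0 \<Longrightarrow> kf (t x) y = kf x z"
  shows "y \<in> Ds" "ts y = z"
proof -
  show "y \<in> Ds" unfolding kadj_def using assms by auto
  have "(THE z. \<forall>x\<in>D0. kf (t x) y = kf x z) = z"
  proof (rule the_equality)
    show "\<forall>x\<in>D0. kf (t x) y = kf x z" using assms by blast
    fix z' assume "\<forall>x\<in>D0. kf (t x) y = kf x z'"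
    then have "\<And>x. x \<in> D0 \<Longrightarrow> kf x z' = kf x z" using assms by simp
    then show "z' = z" by (rule dense_eq)
  qed
  then show "ts y = z" unfolding kadj_def by simp
qed

lemma adj_prop: assumes "y \<in> Ds" "x \<in> D0" shows "kf (t x) y = kf x (ts y)"
proof -
  obtain z where z: "\<forall>x\<in>D0. kf (t x) y = kf x z" using assms(1) unfolding kadj_def by auto
  then have "ts y = z" using adj_eq by blast
  then show ?thesis using z assms(2) by simp
qed

lemma adj_add: assumes "y \<in> Ds" "w \<in> Ds" shows "y + w \<in> Ds \<and> ts (y + w) = ts y + ts w"
proof -
  have "\<And>x. x \<in> D0 \<Longrightarrow> kf (t x) (y + w) = kf x (ts y + ts w)"
    using adj_prop assms by (simp add: kf_add_r)
  then show ?thesis using adj_eq by blast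
qed

lemma adj_sc: assumes "y \<in> Ds" shows "sc a y \<in> Ds \<and> ts (sc a y) = sc a (ts y)"
proof -
  have "\<And>x. x \<in> D0 \<Longrightarrow> kf (t x) (sc a y) = kf x (sc a (ts y))"
    using adj_prop assms by (simp add: kf_sc_r)
  then show ?thesis using adj_eq by blast
qed

lemma adj_0: "0 \<in> Ds \<and> ts 0 = 0"
  using adj_eq[of 0 0] by simp

lemma adj_diff: assumes "y \<in> Ds" "w \<in> Ds" shows "y - w \<in> Ds \<and> ts (y - w) = ts y - ts w"
  using adj_add[OF assms(1), of "sc (-1) w"] adj_sc[OF assms(2), of "-1"] by (simp add: sc_m1)

lemma subDs: "csubspace sc Ds" unfolding csubspace_def using adj_0 adj_add adj_sc by blast

lemma adj_closed:
  assumes "\<And>n. X n \<in> Ds" "kc X w" "kc (\<lambda>n. ts (X n)) v"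
  shows "w \<in> Ds \<and> ts w = v"
proof -
  have "kf (t x) w = kf x v" if x: "x \<in> D0" for x
  proof -
    have "(\<lambda>n. kf (t x) (X n)) \<longlonglongrightarrow> kf (t x) w" by (rule kc_kf_r[OF assms(2)])
    moreover have "(\<lambda>n. kf x (ts (X n))) \<longlonglongrightarrow> kf x v" by (rule kc_kf_r[OF assms(3)])
    moreover have "(\<lambda>n. kf (t x) (X n)) = (\<lambda>n. kf x (ts (X n)))" using adj_prop assms(1) x by auto
    ultimately show ?thesis using LIMSEQ_unique by metis
  qed
  then show ?thesis using adj_eq by blast
qed

lemma T_closed: "(\<And>n. X n \<in> D0) \<Longrightarrow> kc X x \<Longrightarrow> kc (\<lambda>n. t (X n)) y \<Longrightarrow> x \<in> D0 \<and> t x = y"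
  using cloT unfolding closed_op_def by blast

lemma linadj: "linear_op sc (kadj kf T)"
  unfolding linear_op_def using subDs adj_add adj_sc by blast

lemma lin_lop_comp:
  assumes a: "linear_op sc S1" and b: "linear_op sc S2"
  shows "linear_op sc (lop_comp S1 S2)"
proof -
  have s1: "csubspace sc (fst S1)" and s2: "csubspace sc (fst S2)" using a b unfolding linear_op_def by auto
  have a1: "\<And>x y. x \<in> fst S1 \<Longrightarrow> y \<in> fst S1 \<Longrightarrow> snd S1 (x + y) = snd S1 x + snd S1 y"
   and a2: "\<And>x y. x \<in> fst S2 \<Longrightarrow> y \<in> fst S2 \<Longrightarrow> snd S2 (x + y) = snd S2 x + snd S2 y"
   and m1: "\<And>c x. x \<in> fst S1 \<Longrightarrow> snd S1 (sc c x) = sc c (snd S1 x)"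
   and m2: "\<And>c x. x \<in> fst S2 \<Longrightarrow> snd S2 (sc c x) = sc c (snd S2 x)"
    using a b unfolding linear_op_def by auto
  have z2: "snd S2 0 = 0" using m2[of 0 0] csub_0[OF s2] by simp
  show ?thesis unfolding linear_op_def lop_comp_def csubspace_def fst_conv snd_conv
  proof (intro conjI ballI allI)
    show "0 \<in> {x \<in> fst S2. snd S2 x \<in> fst S1}" using z2 csub_0[OF s1] csub_0[OF s2] by simp
  next
    fix x y assume "x \<in> {x \<in> fst S2. snd S2 x \<in> fst S1}" "y \<in> {x \<in> fst S2. snd S2 x \<in> fst S1}"
    then show "x + y \<in> {x \<in> fst S2. snd S2 x \<in> fst S1}" "snd S1 (snd S2 (x + y)) = snd S1 (snd S2 x) + snd S1 (snd S2 y)"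
      using a1 a2 csub_add[OF s1] csub_add[OF s2] by auto
  next
    fix c x assume "x \<in> {x \<in> fst S2. snd S2 x \<in> fst S1}"
    then show "sc c x \<in> {x \<in> fst S2. snd S2 x \<in> fst S1}" "snd S1 (snd S2 (sc c x)) = sc c (snd S1 (snd S2 x))"
      using m1 m2 csub_sc[OF s1] csub_sc[OF s2] by auto
  qed
qed

end

locale kmain = kop sc kf Kp Km T
  for sc :: "complex \<Rightarrow> 'a::ab_group_add \<Rightarrow> 'a" and kf Kp Km T +
  fixes \<mu> :: complex
  assumes B0: "0 \<in> rho sc kf Kp Km (lop_comp (kadj kf T) T)"
    and Smu: "\<mu> \<in> rho sc kf Kp Km (lop_comp T (kadj kf T))"
    and S0: "0 \<notin> rho sc kf Kp Km (lop_comp T (kadj kf T))"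
begin

abbreviation "BB \<equiv> lop_comp (kadj kf T) T"
abbreviation "SS \<equiv> lop_comp T (kadj kf T)"

definition "G = resolvent sc BB 0"
definition "R = resolvent sc SS \<mu>"
definition "C y = t (G y)"
definition "Dd y = ts (R y)"

lemma fstB: "fst BB = {x \<in> D0. t x \<in> Ds}" and sndB: "snd BB x = ts (t x)"
  unfolding lop_comp_def by simp_all
lemma fstS: "fst SS = {x \<in> Ds. ts x \<in> D0}" and sndS: "snd SS x = t (ts x)"
  unfolding lop_comp_def by simp_all

lemma mu0: "\<mu> \<noteq> 0" using Smu S0 by auto

lemma G_in: "G y \<in> D0" "t (G y) \<in> Ds" "ts (t (G y)) = y"
  using rho_props(1,2)[OF B0, of y] unfolding G_def fstB shift_op_def sndB by auto

lemma G_inv: "x \<in> D0 \<Longrightarrow> t x \<in> Ds \<Longrightarrow> G (ts (t x)) = x"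
  using rho_props(4)[OF B0, of x] unfolding G_def fstB shift_op_def sndB by auto

lemma linG: "lin G" unfolding G_def by (rule rho_lin[OF B0 lin_lop_comp[OF linadj linT]])

definition "gg = (SOME c. c \<ge> 0 \<and> bnd G c)"
lemma gg: "gg \<ge> 0" "bnd G gg"
  using someI_ex[OF rho_props(3)[OF B0]] unfolding gg_def G_def by auto

lemma R_in: "R y \<in> Ds" "ts (R y) \<in> D0" "t (ts (R y)) - sc \<mu> (R y) = y"
  using rho_props(1,2)[OF Smu, of y] unfolding R_def fstS shift_op_def sndS by auto

lemma R_inv: "x \<in> Ds \<Longrightarrow> ts x \<in> D0 \<Longrightarrow> R (t (ts x) - sc \<mu> x) = x"
  using rho_props(4)[OF Smu, of x] unfolding R_def fstS shift_op_def sndS by auto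

lemma linR: "lin R" unfolding R_def by (rule rho_lin[OF Smu lin_lop_comp[OF linT linadj]])

definition "rr = (SOME c. c \<ge> 0 \<and> bnd R c)"
lemma rr: "rr \<ge> 0" "bnd R rr"
  using someI_ex[OF rho_props(3)[OF Smu]] unfolding rr_def R_def by auto

lemma linC: "lin C"
  unfolding lin_def C_def
proof (intro conjI allI)
  fix x y show "t (G (x + y)) = t (G x) + t (G y)" using t_add[OF G_in(1) G_in(1)] lin_add[OF linG] by simp
  fix a x show "t (G (sc a x)) = sc a (t (G x))" using t_sc[OF G_in(1)] lin_sc[OF linG] by simp
qed

lemma linD: "lin Dd"
  unfolding lin_def Dd_def
proof (intro conjI allI)
  fix x y show "ts (R (x + y)) = ts (R x) + ts (R y)" using adj_add[OF R_in(1) R_in(1)] lin_add[OF linR] by simp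
  fix a x show "ts (R (sc a x)) = sc a (ts (R x))" using adj_sc[OF R_in(1)] lin_sc[OF linR] by simp
qed

lemma C_bnd: "\<exists>c. bnd C c"
proof (rule closed_graph[OF linC])
  fix X x y assume a: "kc X x" "kc (\<lambda>n. C (X n)) y"
  have "kc (\<lambda>n. G (X n)) (G x)" by (rule kc_lin[OF linG gg(2) a(1)])
  moreover have "kc (\<lambda>n. t (G (X n))) y" using a(2) unfolding C_def .
  ultimately have "G x \<in> D0 \<and> t (G x) = y" by (rule T_closed[OF G_in(1)])
  then show "C x = y" unfolding C_def by simp
qed

lemma D_bnd: "\<exists>c. bnd Dd c"
proof (rule closed_graph[OF linD])
  fix X x y assume a: "kc X x" "kc (\<lambda>n. Dd (X n)) y"
  have "kc (\<lambda>n. R (X n)) (R x)" by (rule kc_lin[OF linR rr(2) a(1)])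
  moreover have "kc (\<lambda>n. ts (R (X n))) y" using a(2) unfolding Dd_def .
  ultimately have "R x \<in> Ds \<and> ts (R x) = y" by (rule adj_closed[OF R_in(1)])
  then show "Dd x = y" unfolding Dd_def by simp
qed

definition "cc = (SOME c. c \<ge> 0 \<and> bnd C c)"
lemma cc: "cc \<ge> 0" "bnd C cc"
proof -
  obtain c where "bnd C c" using C_bnd by blast
  then have "bnd C (max c 0)" by (rule bnd_nonneg)
  then have "\<exists>c. c \<ge> 0 \<and> bnd C c" by (intro exI[of _ "max c 0"]) simp
  then have "cc \<ge> 0 \<and> bnd C cc" unfolding cc_def by (rule someI_ex)
  then show "cc \<ge> 0" "bnd C cc" by simp_all
qed

definition "dd = (SOME c. c \<ge> 0 \<and> bnd Dd c)"
lemma dd: "dd \<ge> 0" "bnd Dd dd"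
proof -
  obtain c where "bnd Dd c" using D_bnd by blast
  then have "bnd Dd (max c 0)" by (rule bnd_nonneg)
  then have "\<exists>c. c \<ge> 0 \<and> bnd Dd c" by (intro exI[of _ "max c 0"]) simp
  then have "dd \<ge> 0 \<and> bnd Dd dd" unfolding dd_def by (rule someI_ex)
  then show "dd \<ge> 0" "bnd Dd dd" by simp_all
qed

lemma D_in: "Dd y \<in> D0" unfolding Dd_def using R_in(2) .

lemma tD: "t (Dd y) = y + sc \<mu> (R y)" unfolding Dd_def using R_in(3)[of y] by (simp add: diff_eq_eq)

end

context kmain begin

lemma neumann:
  assumes q: "cmod l * gg < 1"
  shows "\<exists>w. w = a + sc l (G w) \<and> nm w \<le> nm a / (1 - cmod l * gg)"
proof -
  define q where "q = cmod l * gg"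
  have q0: "q \<ge> 0" using gg(1) by (simp add: q_def)
  have q1: "q < 1" using q by (simp add: q_def)
  define f where "f k = sc (l^k) ((G^^k) a)" for k
  define s where "s n = (\<Sum>k<n. f k)" for n
  have tb: "nm (f k) \<le> nm a * q^k" for k
  proof -
    have "nm (f k) = cmod l ^ k * nm ((G^^k) a)" unfolding f_def nm_sc by (simp add: norm_power)
    also have "\<dots> \<le> cmod l ^ k * (gg^k * nm a)"
      using bnd_D[OF bnd_pow[OF gg(2) gg(1)], of k a] by (simp add: mult_left_mono)
    also have "\<dots> = nm a * q^k" unfolding q_def by (simp add: power_mult_distrib)
    finally show ?thesis .
  qed
  have sb: "summable (\<lambda>k. nm a * q^k)" by (rule summable_mult) (simp add: summable_geometric q0 q1)
  have sv: "suminf (\<lambda>k. nm a * q^k) = nm a / (1 - q)"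
    using suminf_mult[of "\<lambda>k. q^k" "nm a"] suminf_geometric[of q] q0 q1 by simp
  obtain w where w0: "kc (\<lambda>n. \<Sum>k<n. f k) w" "nm w \<le> suminf (\<lambda>k. nm a * q^k)"
    using kc_series[OF tb sb] by blast
  have w: "kc s w" "nm w \<le> nm a / (1 - q)" using w0 sv unfolding s_def by simp_all
  have rec: "s (Suc n) = a + sc l (G (s n))" for n
  proof -
    have "s (Suc n) = f 0 + (\<Sum>k<n. f (Suc k))" unfolding s_def by (rule sum.lessThan_Suc_shift)
    moreover have "f 0 = a" unfolding f_def by simp
    moreover have "f (Suc k) = sc l (G (f k))" for k
      unfolding f_def using lin_sc[OF linG] by simp
    moreover have "sc l (G (s n)) = (\<Sum>k<n. sc l (G (f k)))"
      unfolding s_def by (simp add: lin_sum[OF linG] sc_sum)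
    ultimately show ?thesis by simp
  qed
  have k1: "kc (\<lambda>n. s (Suc n)) w" by (rule kc_Suc[OF w(1)])
  have k2: "kc (\<lambda>n. a + sc l (G (s n))) (a + sc l (G w))"
    by (rule kc_add[OF kc_const kc_sc[OF kc_lin[OF linG gg(2) w(1)]]])
  have "kc (\<lambda>n. s (Suc n)) (a + sc l (G w))" using k2 rec by simp
  then have "w = a + sc l (G w)" by (rule kc_unique[OF k1])
  then show ?thesis using w(2) unfolding q_def by (intro exI[of _ w]) simp
qed

lemma inj_small:
  assumes l: "l \<noteq> 0" "cmod l * gg < 1" and x: "x \<in> fst SS" and e: "t (ts x) - sc l x = 0"
  shows "x = 0"
proof -
  have xs: "x \<in> Ds" and u0: "ts x \<in> D0" using x fstS by auto
  define u where "u = ts x"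
  have tu: "t u = sc l x" using e u_def by simp
  have "sc l x \<in> Ds \<and> ts (sc l x) = sc l u" using adj_sc[OF xs] u_def by simp
  then have "t u \<in> Ds" "ts (t u) = sc l u" using tu by simp_all
  then have "G (sc l u) = u" using G_inv[of u] u0 u_def by simp
  then have gu: "sc l (G u) = u" using lin_sc[OF linG] by simp
  have "nm u = cmod l * nm (G u)" using nm_sc[of l "G u"] gu by simp
  also have "\<dots> \<le> cmod l * (gg * nm u)" using bnd_D[OF gg(2)] by (simp add: mult_left_mono)
  finally have "nm u \<le> (cmod l * gg) * nm u" by (simp add: mult.assoc)
  then have "(1 - cmod l * gg) * nm u \<le> 0" by (simp add: algebra_simps)
  then have "nm u = 0" using l(2) nm_ge0[of u] by (smt (verit) mult_pos_pos)
  then have "u = 0" by (rule nm_eq0)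
  then have "sc l x = 0" using tu t_0 by simp
  then show ?thesis using sc_eq0 l(1) by blast
qed

lemma solve:
  assumes l: "l \<noteq> 0" and w: "w = Dd y + sc l (G w)"
  defines "u \<equiv> Dd y + sc (l - \<mu>) (G w)"
  defines "x \<equiv> sc (inverse l) (t u - y)"
  shows "x \<in> fst SS" "t (ts x) - sc l x = y" "x = sc (inverse l) (sc \<mu> (R y) + sc (l - \<mu>) (C w))"
proof -
  define a where "a = Dd y"
  have a0: "a \<in> D0" using D_in a_def by simp
  have g0: "G w \<in> D0" by (rule G_in(1))
  have sg0: "sc (l - \<mu>) (G w) \<in> D0" using csub_sc[OF subD0 g0] .
  have u0: "u \<in> D0" unfolding u_def a_def[symmetric] using csub_add[OF subD0 a0 sg0] .
  have tu: "t u = t a + sc (l - \<mu>) (C w)"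
    unfolding u_def a_def[symmetric] C_def using t_add[OF a0 sg0] t_sc[OF g0] by simp
  have v: "t u - y = sc \<mu> (R y) + sc (l - \<mu>) (C w)"
    using tu tD[of y] a_def by (simp add: algebra_simps)
  show "x = sc (inverse l) (sc \<mu> (R y) + sc (l - \<mu>) (C w))" unfolding x_def v ..
  have vec: "sc \<mu> a + sc (l - \<mu>) w = sc l u"
  proof -
    have "sc (l - \<mu>) w = sc (l - \<mu>) (a + sc l (G w))" using w a_def by metis
    then have "sc (l - \<mu>) w = sc (l - \<mu>) a + sc ((l - \<mu>) * l) (G w)" by simp
    moreover have "sc l u = sc l a + sc (l * (l - \<mu>)) (G w)" unfolding u_def a_def[symmetric] by simp
    moreover have "sc \<mu> a + sc (l - \<mu>) a = sc l a" using sc_add_l[of \<mu> "l - \<mu>" a] by simp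
    ultimately show ?thesis by (simp add: add.assoc[symmetric] mult.commute)
  qed
  have weak: "kf (t z) (t u - y) = kf z (sc l u)" if z: "z \<in> D0" for z
  proof -
    have "kf (t z) (sc \<mu> (R y)) = kf z (sc \<mu> a)"
      using adj_prop[OF R_in(1) z] a_def Dd_def by (simp add: kf_sc_r)
    moreover have "kf (t z) (sc (l - \<mu>) (C w)) = kf z (sc (l - \<mu>) w)"
      using adj_prop[OF G_in(2) z] G_in(3) C_def by (simp add: kf_sc_r)
    ultimately have "kf (t z) (t u - y) = kf z (sc \<mu> a + sc (l - \<mu>) w)"
      unfolding v by (simp add: kf_add_r)
    then show ?thesis using vec by simp
  qed
  have c1: "cnj (inverse l) * cnj l = 1" using l by (metis complex_cnj_mult complex_cnj_one left_inverse)
  have kx: "kf (t z) x = kf z u" if z: "z \<in> D0" for z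
  proof -
    have "kf (t z) x = cnj (inverse l) * kf (t z) (t u - y)" unfolding x_def by (simp add: kf_sc_r)
    also have "\<dots> = cnj (inverse l) * (cnj l * kf z u)" using weak[OF z] by (simp add: kf_sc_r)
    also have "\<dots> = (cnj (inverse l) * cnj l) * kf z u" by (simp only: mult.assoc)
    also have "\<dots> = kf z u" using c1 by simp
    finally show ?thesis .
  qed
  have xs: "x \<in> Ds" "ts x = u" using adj_eq[of x u, OF kx] by auto
  show "x \<in> fst SS" using xs u0 fstS by simp
  have "sc l x = t u - y" unfolding x_def using l by simp
  then show "t (ts x) - sc l x = y" using xs(2) by simp
qed

end

context kmain begin

definition "Am1 y = sc \<mu> (R y - C (Dd y))"
definition "Ak k y = C ((G^^k) (Dd y - sc \<mu> (G (Dd y))))"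

lemma linGk: "lin (G^^k)" by (rule lin_pow[OF linG])

lemma powP:
  assumes w: "w = a + sc l (G w)"
  shows "(\<Sum>k<N. sc (l^k) ((G^^k) a)) = w - sc (l^N) ((G^^N) w)"
proof (induction N)
  case 0 then show ?case by simp
next
  case (Suc N)
  have a: "a = w - sc l (G w)" using w by (metis add_diff_cancel_right')
  have "(G^^N) a = (G^^N) w - sc l ((G^^N) (G w))"
    unfolding a using lin_diff[OF linGk] lin_sc[OF linGk] by simp
  also have "(G^^N) (G w) = (G^^Suc N) w" by (simp add: funpow_swap1)
  finally have ga: "sc (l^N) ((G^^N) a) = sc (l^N) ((G^^N) w) - sc (l^Suc N) ((G^^Suc N) w)"
    by (simp add: sc_diff_r mult.commute)
  have "(\<Sum>k<Suc N. sc (l^k) ((G^^k) a)) = (\<Sum>k<N. sc (l^k) ((G^^k) a)) + sc (l^N) ((G^^N) a)" by simp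
  also have "\<dots> = (w - sc (l^N) ((G^^N) w)) + (sc (l^N) ((G^^N) w) - sc (l^Suc N) ((G^^Suc N) w))"
    using Suc.IH ga by simp
  also have "\<dots> = w - sc (l^Suc N) ((G^^Suc N) w)" by simp
  finally show ?case .
qed

lemma tail:
  assumes l: "l \<noteq> 0" and w: "w = Dd y + sc l (G w)"
  shows "sc (inverse l) (sc \<mu> (R y) + sc (l - \<mu>) (C w)) - (sc (inverse l) (Am1 y) + (\<Sum>k<N. sc (l^k) (Ak k y)))
         = sc (l^N) (C ((G^^N) (w - sc \<mu> (G w))))"
proof -
  define a where "a = Dd y"
  define P where "P = (\<Sum>k<N. sc (l^k) ((G^^k) a))"
  have hP: "P = w - sc (l^N) ((G^^N) w)" unfolding P_def by (rule powP) (use w a_def in simp)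
  have trm: "sc (l^k) (Ak k y) = C (sc (l^k) ((G^^k) a)) - sc \<mu> (C (G (sc (l^k) ((G^^k) a))))" for k
  proof -
    have "(G^^k) (a - sc \<mu> (G a)) = (G^^k) a - sc \<mu> (G ((G^^k) a))"
      using lin_diff[OF linGk] lin_sc[OF linGk] by (simp add: funpow_swap1)
    then have "Ak k y = C ((G^^k) a) - sc \<mu> (C (G ((G^^k) a)))"
      unfolding Ak_def a_def[symmetric] using lin_diff[OF linC] lin_sc[OF linC] by simp
    then show ?thesis using lin_sc[OF linC] lin_sc[OF linG] by (simp add: sc_diff_r mult.commute)
  qed
  have hA: "(\<Sum>k<N. sc (l^k) (Ak k y)) = C P - sc \<mu> (C (G P))"
    unfolding trm P_def by (simp add: sum_subtractf lin_sum[OF linC] lin_sum[OF linG] sc_sum)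
  define X1 where "X1 = R y"
  define X2 where "X2 = C w"
  define X3 where "X3 = C (G w)"
  define X4 where "X4 = C ((G^^N) w)"
  define X5 where "X5 = C (G ((G^^N) w))"
  have CP: "C P = X2 - sc (l^N) X4" unfolding hP X2_def X4_def using lin_diff[OF linC] lin_sc[OF linC] by simp
  have GP: "C (G P) = X3 - sc (l^N) X5" unfolding hP X3_def X5_def
    using lin_diff[OF linC] lin_sc[OF linC] lin_diff[OF linG] lin_sc[OF linG] by simp
  have aw: "a = w - sc l (G w)" using w a_def by (metis add_diff_cancel_right')
  have Ca: "C a = X2 - sc l X3" unfolding aw X2_def X3_def using lin_diff[OF linC] lin_sc[OF linC] by simp
  have f1: "sc (inverse l * (l - \<mu>)) X2 + sc (inverse l * \<mu>) X2 = X2"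
  proof -
    have "inverse l * (l - \<mu>) + inverse l * \<mu> = 1" using l by (simp add: field_simps)
    then show ?thesis using sc_add_l[of "inverse l * (l - \<mu>)" "inverse l * \<mu>" X2] by simp
  qed
  have f2: "inverse l * (\<mu> * l) = \<mu>" using l by (simp add: field_simps)
  have E1: "sc (inverse l) (sc \<mu> X1 + sc (l - \<mu>) X2) - sc (inverse l) (sc \<mu> (X1 - C a)) = X2 - sc \<mu> X3"
  proof -
    have "sc (inverse l) (sc \<mu> X1 + sc (l - \<mu>) X2) - sc (inverse l) (sc \<mu> (X1 - C a))
        = sc (inverse l * (l - \<mu>)) X2 + sc (inverse l * \<mu>) X2 - sc (inverse l * (\<mu> * l)) X3"
      unfolding Ca by (simp add: sc_diff_r algebra_simps)
    also have "\<dots> = X2 - sc \<mu> X3" by (simp only: f1 f2)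
    finally show ?thesis .
  qed
  have "sc (inverse l) (sc \<mu> (R y) + sc (l - \<mu>) (C w)) - (sc (inverse l) (Am1 y) + (\<Sum>k<N. sc (l^k) (Ak k y)))
      = (sc (inverse l) (sc \<mu> X1 + sc (l - \<mu>) X2) - sc (inverse l) (sc \<mu> (X1 - C a))) - (C P - sc \<mu> (C (G P)))"
    unfolding hA Am1_def X1_def X2_def a_def by (simp add: algebra_simps)
  also have "\<dots> = (X2 - sc \<mu> X3) - ((X2 - sc (l^N) X4) - sc \<mu> (X3 - sc (l^N) X5))"
    unfolding E1 CP GP ..
  also have "\<dots> = sc (l^N) X4 - sc (\<mu> * l^N) X5" by (simp add: sc_diff_r algebra_simps)
  also have "\<dots> = sc (l^N) (C ((G^^N) (w - sc \<mu> (G w))))"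
  proof -
    have "(G^^N) (w - sc \<mu> (G w)) = (G^^N) w - sc \<mu> (G ((G^^N) w))"
      using lin_diff[OF linGk] lin_sc[OF linGk] by (simp add: funpow_swap1)
    then have "C ((G^^N) (w - sc \<mu> (G w))) = X4 - sc \<mu> X5"
      unfolding X4_def X5_def using lin_diff[OF linC] lin_sc[OF linC] by simp
    then show ?thesis by (simp add: sc_diff_r mult.commute)
  qed
  finally show ?thesis .
qed

end

context kr begin

lemma lin_diffop: "lin A \<Longrightarrow> lin B \<Longrightarrow> lin (\<lambda>x. A x - B x)"
  unfolding lin_def by (simp add: sc_diff_r algebra_simps)
lemma bnd_diffop: assumes "bnd A a" "bnd B b" shows "bnd (\<lambda>x. A x - B x) (a + b)"
  unfolding bnd_def
proof
  fix x
  have "nm (A x - B x) \<le> nm (A x) + nm (B x)" by (rule nm_diff_le)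
  also have "\<dots> \<le> a * nm x + b * nm x" using bnd_D[OF assms(1), of x] bnd_D[OF assms(2), of x] by simp
  finally show "nm (A x - B x) \<le> (a + b) * nm x" by (simp add: distrib_right)
qed
lemma lin_scop: "lin A \<Longrightarrow> lin (\<lambda>x. sc c (A x))"
  unfolding lin_def by (simp add: mult.commute)
lemma bnd_scop: assumes "bnd A a" shows "bnd (\<lambda>x. sc c (A x)) (cmod c * a)"
  unfolding bnd_def
proof
  fix x
  have "nm (sc c (A x)) = cmod c * nm (A x)" by (rule nm_sc)
  also have "\<dots> \<le> cmod c * (a * nm x)" using bnd_D[OF assms, of x] by (simp add: mult_left_mono)
  finally show "nm (sc c (A x)) \<le> cmod c * a * nm x" by (simp add: mult.assoc)
qed

lemma opnorm_le:
  assumes "\<And>x. nm (X x) \<le> c * nm x" "c \<ge> 0"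
  shows "0 \<le> opnorm kf Kp Km X" "opnorm kf Kp Km X \<le> c"
proof -
  define A where "A = {nm (X x) |x. nm x \<le> 1}"
  have ne: "nm (X 0) \<in> A" unfolding A_def by auto
  have ub: "\<And>v. v \<in> A \<Longrightarrow> v \<le> c"
  proof -
    fix v assume "v \<in> A"
    then obtain x where "v = nm (X x)" "nm x \<le> 1" unfolding A_def by auto
    moreover have "c * nm x \<le> c" using \<open>nm x \<le> 1\<close> assms(2) by (simp add: mult_left_le)
    ultimately show "v \<le> c" using assms(1)[of x] by simp
  qed
  have bdd: "bdd_above A" using ub by (intro bdd_aboveI) 
  show "opnorm kf Kp Km X \<le> c" unfolding opnorm_def A_def[symmetric]
    by (rule cSup_least) (use ne ub in auto)
  have "nm (X 0) \<le> Sup A" by (rule cSup_upper[OF ne bdd])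
  then show "0 \<le> opnorm kf Kp Km X" unfolding opnorm_def A_def[symmetric] using nm_ge0 order_trans by blast
qed

end

context kmain begin

lemma linE: "lin (\<lambda>v. v - sc \<mu> (G v))" by (rule lin_diffop[OF lin_id lin_scop[OF linG]])
lemma bndE: "bnd (\<lambda>v. v - sc \<mu> (G v)) (1 + cmod \<mu> * gg)" by (rule bnd_diffop[OF bnd_id bnd_scop[OF gg(2)]])

lemma linAm1: "lin Am1"
  unfolding Am1_def[abs_def] by (rule lin_scop[OF lin_diffop[OF linR lin_comp[OF linC linD]]])
lemma bndAm1: "bnd Am1 (cmod \<mu> * (rr + cc * dd))"
  unfolding Am1_def[abs_def] by (rule bnd_scop[OF bnd_diffop[OF rr(2) bnd_comp[OF cc(2) dd(2) cc(1)]]])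

lemma linAk: "lin (Ak k)"
  unfolding Ak_def[abs_def] by (rule lin_comp[OF linC lin_comp[OF linGk lin_comp[OF linE linD]]])
lemma bndAk: "bnd (Ak k) (cc * (gg^k * ((1 + cmod \<mu> * gg) * dd)))"
  unfolding Ak_def[abs_def]
  by (rule bnd_comp[OF cc(2) bnd_comp[OF bnd_pow[OF gg(2) gg(1)] bnd_comp[OF bndE dd(2)]] cc(1)])
     (use gg(1) in simp_all)

lemma shift_SS: "shift_op sc SS l x = t (ts x) - sc l x" unfolding shift_op_def sndS ..

lemma linSS: "linear_op sc SS" by (rule lin_lop_comp[OF linT linadj])

lemma inj_shift:
  assumes "\<And>x. x \<in> fst SS \<Longrightarrow> t (ts x) - sc l x = 0 \<Longrightarrow> x = 0"
  shows "inj_on (shift_op sc SS l) (fst SS)"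
proof (rule inj_onI)
  fix x1 x2 assume x: "x1 \<in> fst SS" "x2 \<in> fst SS" and e: "shift_op sc SS l x1 = shift_op sc SS l x2"
  have sub: "csubspace sc (fst SS)" using linSS unfolding linear_op_def by blast
  have d: "x1 - x2 \<in> fst SS" by (rule csub_diff[OF sub x])
  have "snd SS (x1 - x2) = snd SS x1 - snd SS x2"
  proof -
    have "snd SS (x1 + (- x2)) = snd SS x1 + snd SS (- x2)"
      using linSS csub_neg[OF sub x(2)] x(1) unfolding linear_op_def by blast
    moreover have "snd SS (sc (-1) x2) = sc (-1) (snd SS x2)" using linSS x(2) unfolding linear_op_def by blast
    ultimately show ?thesis by (simp add: sc_m1)
  qed
  then have "t (ts (x1 - x2)) - sc l (x1 - x2) = (t (ts x1) - t (ts x2)) - (sc l x1 - sc l x2)"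
    unfolding sndS by (simp add: sc_diff_r)
  also have "\<dots> = (t (ts x1) - sc l x1) - (t (ts x2) - sc l x2)" by (simp add: algebra_simps)
  also have "\<dots> = 0" using e unfolding shift_SS by simp
  finally have "t (ts (x1 - x2)) - sc l (x1 - x2) = 0" .
  then have "x1 - x2 = 0" by (rule assms[OF d])
  then show "x1 = x2" by simp
qed

definition "Wf l y = (SOME w. w = Dd y + sc l (G w) \<and> nm w \<le> nm (Dd y) / (1 - cmod l * gg))"

lemma Wf: assumes "cmod l * gg < 1"
  shows "Wf l y = Dd y + sc l (G (Wf l y))" "nm (Wf l y) \<le> nm (Dd y) / (1 - cmod l * gg)"
proof -
  have "Wf l y = Dd y + sc l (G (Wf l y)) \<and> nm (Wf l y) \<le> nm (Dd y) / (1 - cmod l * gg)"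
    unfolding Wf_def by (rule someI_ex[OF neumann[OF assms]])
  then show "Wf l y = Dd y + sc l (G (Wf l y))" "nm (Wf l y) \<le> nm (Dd y) / (1 - cmod l * gg)" by simp_all
qed

definition "Xf l y = sc (inverse l) (sc \<mu> (R y) + sc (l - \<mu>) (C (Wf l y)))"

lemma tail_bound:
  assumes l: "l \<noteq> 0" "cmod l * gg < 1"
  shows "nm (Xf l y - (sc (inverse l) (Am1 y) + (\<Sum>k<N. sc (l^k) (Ak k y))))
           \<le> (cc * (1 + cmod \<mu> * gg) * dd / (1 - cmod l * gg)) * (cmod l * gg)^N * nm y"
proof -
  define w where "w = Wf l y"
  have w: "w = Dd y + sc l (G w)" "nm w \<le> nm (Dd y) / (1 - cmod l * gg)" using Wf[OF l(2)] w_def by auto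
  have q1: "1 - cmod l * gg > 0" using l(2) by simp
  have "Xf l y - (sc (inverse l) (Am1 y) + (\<Sum>k<N. sc (l^k) (Ak k y))) = sc (l^N) (C ((G^^N) (w - sc \<mu> (G w))))"
    unfolding Xf_def w_def[symmetric] by (rule tail[OF l(1) w(1)])
  moreover have "nm (sc (l^N) (C ((G^^N) (w - sc \<mu> (G w))))) \<le> cmod l ^ N * (cc * (gg^N * ((1 + cmod \<mu> * gg) * nm w)))"
  proof -
    have b: "bnd (\<lambda>v. C ((G^^N) (v - sc \<mu> (G v)))) (cc * (gg^N * (1 + cmod \<mu> * gg)))"
      by (rule bnd_comp[OF cc(2) bnd_comp[OF bnd_pow[OF gg(2) gg(1)] bndE] cc(1)]) (use gg(1) in simp)
    show ?thesis unfolding nm_sc using bnd_D[OF b, of w]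
      by (simp add: norm_power mult_left_mono mult.assoc)
  qed
  moreover have nw: "nm w \<le> dd * nm y / (1 - cmod l * gg)"
  proof -
    have "nm (Dd y) \<le> dd * nm y" by (rule bnd_D[OF dd(2)])
    then have "nm (Dd y) / (1 - cmod l * gg) \<le> dd * nm y / (1 - cmod l * gg)"
      using q1 by (simp add: divide_right_mono)
    then show ?thesis using w(2) by simp
  qed
  moreover have "cmod l ^ N * (cc * (gg^N * ((1 + cmod \<mu> * gg) * nm w)))
     \<le> cmod l ^ N * (cc * (gg^N * ((1 + cmod \<mu> * gg) * (dd * nm y / (1 - cmod l * gg)))))"
  proof -
    have h0: "0 \<le> 1 + cmod \<mu> * gg" using gg(1) by simp
    have "(1 + cmod \<mu> * gg) * nm w \<le> (1 + cmod \<mu> * gg) * (dd * nm y / (1 - cmod l * gg))"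
      by (rule mult_left_mono[OF nw h0])
    then have "gg^N * ((1 + cmod \<mu> * gg) * nm w) \<le> gg^N * ((1 + cmod \<mu> * gg) * (dd * nm y / (1 - cmod l * gg)))"
      by (rule mult_left_mono) (simp add: gg(1))
    then have "cc * (gg^N * ((1 + cmod \<mu> * gg) * nm w)) \<le> cc * (gg^N * ((1 + cmod \<mu> * gg) * (dd * nm y / (1 - cmod l * gg))))"
      by (rule mult_left_mono) (simp add: cc(1))
    then show ?thesis by (rule mult_left_mono) simp
  qed
  ultimately have "nm (Xf l y - (sc (inverse l) (Am1 y) + (\<Sum>k<N. sc (l^k) (Ak k y))))
     \<le> cmod l ^ N * (cc * (gg^N * ((1 + cmod \<mu> * gg) * (dd * nm y / (1 - cmod l * gg)))))"
    by simp
  also have "\<dots> = (cc * (1 + cmod \<mu> * gg) * dd / (1 - cmod l * gg)) * (cmod l * gg)^N * nm y"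
    by (simp add: power_mult_distrib field_simps)
  finally show ?thesis .
qed

lemma small_rho:
  assumes l: "l \<noteq> 0" "cmod l * gg < 1"
  shows "l \<in> rho sc kf Kp Km SS" "resolvent sc SS l y = Xf l y"
proof -
  have sol: "Xf l z \<in> fst SS" "shift_op sc SS l (Xf l z) = z" for z
    using solve[OF l(1) Wf(1)[OF l(2), of z]] unfolding Xf_def shift_SS by auto
  have inj: "inj_on (shift_op sc SS l) (fst SS)"
    by (rule inj_shift) (rule inj_small[OF l])
  have bij: "bij_betw (shift_op sc SS l) (fst SS) UNIV"
    unfolding bij_betw_def
  proof
    show "inj_on (shift_op sc SS l) (fst SS)" by (rule inj)
    have "z \<in> shift_op sc SS l ` fst SS" for z
      using rev_image_eqI[of "Xf l z" "fst SS" z "shift_op sc SS l"] sol(1)[of z] sol(2)[of z] by simp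
    then show "shift_op sc SS l ` fst SS = UNIV" by blast
  qed
  have res: "resolvent sc SS l z = Xf l z" for z
    unfolding resolvent_def by (rule inv_into_f_eq[OF inj sol(1) sol(2)])
  then show "resolvent sc SS l y = Xf l y" .
  define K where "K = cc * (1 + cmod \<mu> * gg) * dd / (1 - cmod l * gg)"
  have "nm (Xf l z) \<le> (cmod (inverse l) * (cmod \<mu> * (rr + cc * dd)) + K) * nm z" for z
  proof -
    have "nm (Xf l z - sc (inverse l) (Am1 z)) \<le> K * nm z"
      using tail_bound[OF l, of z 0] unfolding K_def by simp
    moreover have "nm (sc (inverse l) (Am1 z)) \<le> cmod (inverse l) * (cmod \<mu> * (rr + cc * dd)) * nm z"
      using bnd_D[OF bnd_scop[OF bndAm1], of "inverse l" z] by simp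
    moreover have "nm (Xf l z) \<le> nm (Xf l z - sc (inverse l) (Am1 z)) + nm (sc (inverse l) (Am1 z))"
      using nm_triangle[of "Xf l z - sc (inverse l) (Am1 z)" "sc (inverse l) (Am1 z)"] by simp
    ultimately show ?thesis by (simp add: algebra_simps)
  qed
  then have "\<forall>z. nm (resolvent sc SS l z) \<le> (cmod (inverse l) * (cmod \<mu> * (rr + cc * dd)) + K) * nm z"
    using res by simp
  then show "l \<in> rho sc kf Kp Km SS" unfolding rho_def using bij by blast
qed

end

context kmain begin

lemma ker0:
  assumes x: "x \<in> fst SS" and e: "t (ts x) = 0" and A: "Am1 = (\<lambda>_. 0)"
  shows "x = 0"
proof -
  have xs: "x \<in> Ds" "ts x \<in> D0" using x fstS by auto
  define u where "u = ts x"
  have "t u \<in> Ds" "ts (t u) = 0" using e adj_0 u_def by simp_all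
  then have "G 0 = u" using G_inv[of u] xs(2) u_def by simp
  then have u0: "ts x = 0" using lin_0[OF linG] u_def by simp
  have "R (t (ts x) - sc \<mu> x) = x" by (rule R_inv[OF xs])
  then have "R (- sc \<mu> x) = x" using e by simp
  then have xe: "x = - sc \<mu> (R x)" using lin_neg[OF linR] lin_sc[OF linR] by simp
  have "R x = sc (- inverse \<mu>) x"
  proof -
    have "sc (- inverse \<mu>) x = sc (- inverse \<mu>) (- sc \<mu> (R x))" using xe by metis
    also have "\<dots> = R x" using mu0 by (simp add: sc_neg_r sc_neg_l)
    finally show ?thesis by simp
  qed
  then have "Dd x = 0" unfolding Dd_def using adj_sc[OF xs(1), of "- inverse \<mu>"] u0 by simp
  then have "Am1 x = sc \<mu> (R x)" unfolding Am1_def using lin_0[OF linC] by simp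
  then have "sc \<mu> (R x) = 0" using A by simp
  then have "R x = 0" using sc_eq0 mu0 by blast
  then show ?thesis using xe by simp
qed

lemma Am1_nz: "Am1 \<noteq> (\<lambda>_. 0)"
proof
  assume A: "Am1 = (\<lambda>_. 0)"
  have sol: "Ak 0 y \<in> fst SS \<and> shift_op sc SS 0 (Ak 0 y) = y" for y
  proof -
    define a where "a = Dd y"
    define v where "v = a - sc \<mu> (G a)"
    have a0: "a \<in> D0" using D_in a_def by simp
    have v0: "v \<in> D0" unfolding v_def using csub_diff[OF subD0 a0 csub_sc[OF subD0 G_in(1)]] .
    have x0: "Ak 0 y = t (G v)" unfolding Ak_def C_def v_def a_def by simp
    have xs: "t (G v) \<in> Ds" "ts (t (G v)) = v" using G_in by auto
    have "t v = t a - sc \<mu> (C a)" unfolding v_def C_def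
      using t_diff[OF a0 csub_sc[OF subD0 G_in(1)]] t_sc[OF G_in(1)] by simp
    also have "t a = y + sc \<mu> (R y)" using tD a_def by simp
    also have "sc \<mu> (R y) = sc \<mu> (C a)"
    proof -
      have "sc \<mu> (R y - C a) = 0" using A unfolding Am1_def a_def by metis
      then show ?thesis by (simp add: sc_diff_r)
    qed
    finally have "t v = y" by simp
    then show ?thesis unfolding x0 shift_SS using xs v0 fstS by simp
  qed
  have inj: "inj_on (shift_op sc SS 0) (fst SS)"
  proof (rule inj_shift)
    fix x assume "x \<in> fst SS" "t (ts x) - sc 0 x = 0"
    then show "x = 0" using ker0[OF _ _ A] by simp
  qed
  have bij: "bij_betw (shift_op sc SS 0) (fst SS) UNIV"
    unfolding bij_betw_def
  proof
    show "inj_on (shift_op sc SS 0) (fst SS)" by (rule inj)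
    have "z \<in> shift_op sc SS 0 ` fst SS" for z
      using rev_image_eqI[of "Ak 0 z" "fst SS" z "shift_op sc SS 0"] sol[of z] by simp
    then show "shift_op sc SS 0 ` fst SS = UNIV" by blast
  qed
  have res: "resolvent sc SS 0 z = Ak 0 z" for z
    unfolding resolvent_def using inv_into_f_eq[OF inj] sol by blast
  have "\<forall>z. nm (resolvent sc SS 0 z) \<le> (cc * (gg^0 * ((1 + cmod \<mu> * gg) * dd))) * nm z"
    using res bnd_D[OF bndAk[of 0]] by simp
  then have "0 \<in> rho sc kf Kp Km SS" unfolding rho_def using bij by blast
  then show False using S0 by simp
qed

lemma pole: "pole_order_one sc kf Kp Km SS 0"
  unfolding pole_order_one_def
proof (intro exI conjI allI impI)
  define r where "r = 1 / (gg + 1)"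
  show "0 < r" unfolding r_def using gg(1) by simp
  define A where "A = (\<lambda>n::int. if n = -1 then Am1 else Ak (nat n))"
  show "bounded_op sc kf Kp Km (A n)" for n
    unfolding A_def bounded_op_iff using linAm1 bndAm1 linAk bndAk by auto
  show "A (-1) \<noteq> (\<lambda>_. 0)" unfolding A_def using Am1_nz by simp
  fix l assume lr: "0 < cmod (l - 0) \<and> cmod (l - 0) < r"
  have l0: "l \<noteq> 0" using lr by auto
  have "cmod l * (gg + 1) < 1" using lr gg(1) unfolding r_def by (simp add: field_simps)
  then have lq: "cmod l * gg < 1" by (simp add: algebra_simps) (smt (verit) norm_ge_zero)
  show "l \<in> rho sc kf Kp Km SS" by (rule small_rho(1)[OF l0 lq])
  define K where "K = cc * (1 + cmod \<mu> * gg) * dd / (1 - cmod l * gg)"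
  define q where "q = cmod l * gg"
  have q: "0 \<le> q" "q < 1" using lq gg(1) unfolding q_def by simp_all
  have K0: "K \<ge> 0" unfolding K_def using cc(1) dd(1) gg(1) lq by simp
  define F where "F N = (\<lambda>y. resolvent sc SS l y - (sc (inverse (l - 0)) (A (-1) y) +
                   (\<Sum>k<N. sc ((l - 0) ^ k) (A (int k) y))))" for N
  have FN: "nm (F N y) \<le> (K * q^N) * nm y" for N y
  proof -
    have "F N y = Xf l y - (sc (inverse l) (Am1 y) + (\<Sum>k<N. sc (l^k) (Ak k y)))"
      unfolding F_def A_def small_rho(2)[OF l0 lq] by simp
    then show ?thesis using tail_bound[OF l0 lq, of y N] unfolding K_def q_def by simp
  qed
  have ub: "opnorm kf Kp Km (F N) \<le> K * q^N" and lb: "0 \<le> opnorm kf Kp Km (F N)" for N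
    using opnorm_le[OF FN] K0 q(1) by simp_all
  have "(\<lambda>N. K * q^N) \<longlonglongrightarrow> 0"
    by (rule tendsto_mult_right_zero) (rule LIMSEQ_power_zero; use q in simp)
  then have "(\<lambda>N. opnorm kf Kp Km (F N)) \<longlonglongrightarrow> 0" using real_squeeze[OF lb ub] by simp
  then show "(\<lambda>N. opnorm kf Kp Km (\<lambda>y. resolvent sc SS l y - (sc (inverse (l - 0)) (A (-1) y) +
                   (\<Sum>k<N. sc ((l - 0) ^ k) (A (int k) y))))) \<longlonglongrightarrow> 0"
    unfolding F_def .
qed

end

theorem corollary2p4:
  fixes sc :: "complex \<Rightarrow> 'a::ab_group_add \<Rightarrow> 'a"
    and kf :: "'a \<Rightarrow> 'a \<Rightarrow> complex"
    and Kp Km :: "'a set"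
    and T :: "'a lop"
  assumes "krein_space sc kf Kp Km"
    and "linear_op sc T"
    and "closed_op kf Kp Km T"
    and "kdense kf Kp Km (fst T)"
    and "rho sc kf Kp Km (lop_comp (kadj kf T) T) \<noteq> {}"
    and "rho sc kf Kp Km (lop_comp T (kadj kf T)) \<noteq> {}"
    and "0 \<in> rho sc kf Kp Km (lop_comp (kadj kf T) T)"
    and "0 \<in> spec sc kf Kp Km (lop_comp T (kadj kf T))"
  shows "pole_order_one sc kf Kp Km (lop_comp T (kadj kf T)) 0"
proof -
  obtain \<mu> where mu: "\<mu> \<in> rho sc kf Kp Km (lop_comp T (kadj kf T))" using assms(6) by blast
  have S0: "0 \<notin> rho sc kf Kp Km (lop_comp T (kadj kf T))" using assms(8) unfolding spec_def by simp
  interpret kmain sc kf Kp Km T \<mu>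
  proof (unfold_locales)
    show "krein_space sc kf Kp Km" by (rule assms(1))
    show "linear_op sc T" by (rule assms(2))
    show "closed_op kf Kp Km T" by (rule assms(3))
    show "kdense kf Kp Km (fst T)" by (rule assms(4))
    show "0 \<in> rho sc kf Kp Km (lop_comp (kadj kf T) T)" by (rule assms(7))
    show "\<mu> \<in> rho sc kf Kp Km (lop_comp T (kadj kf T))" by (rule mu)
    show "0 \<notin> rho sc kf Kp Km (lop_comp T (kadj kf T))" by (rule S0)
  qed
  show ?thesis by (rule pole)
qed


end
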